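(* Let $i\geq1$ and let $T$ be an SSRT of straight partition shape $\lambda$ such that $\lambda$ has an addable node in column $i+1$. Then $\phi_{i+1}(\rho^{-1}(T))=\rho^{-1}(\mathrm{tjdt}_{i+1}(T))$; in particular $\phi_{i+1}(\rho^{-1}(T))$ is an SSRCT.
   Context: SSRTs (French convention, rows numbered from bottom, box $(r,c)$ = row $r$, column $c$): fillings of a partition shape by positive integers weakly decreasing along rows left to right and strictly decreasing up columns. For an SSRT $T$ of shape $\lambda$ with an addable node in column $i+1$, set $T_{(p,q)}=0$ if $(p,q)\notin\lambda$ and $T_{(0,q)}=\infty$; let $r$ be the largest integer such that $(r,i)\in\lambda$ and $T_{(r,i)}<T_{(r-1,i+1)}$ (this is the first entry that moves horizontally during a backward jeu de taquin slide from the addable node in column $i+1$). Then $\mathrm{tjdt}_{i+1}(T)$ is obtained from $T$ by removing the entry $T_{(r,i)}$ and sliding every entry of column $i$ above it down by one row, leaving all other entries unchanged. SSRCTs: compositions drawn as reverse composition diagrams (row $r$ from the top has $\alpha_r$ left-justified boxes). An SSRCT of shape $\alpha$ is a filling by positive integers with (1) rows weakly decreasing left to right, (2) first column strictly increasing top to bottom, (3) for rows $r<s$ and column $c$ with $(s,c+1)\in\alpha$: if $(r,c)\in\alpha$ and $\tau(r,c)\geq\tau(s,c+1)$ then $(r,c+1)\in\alpha$ and $\tau(r,c+1)>\tau(s,c+1)$. The map $\rho$ sends an SSRCT to the SSRT obtained by writing the entries of each column in decreasing order from bottom to top, bottom-justified; it is a known bijection between SSRCTs and SSRTs of straight shape.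 $\phi_{i+1}$: for an SSRCT $\tau$ of shape $\alpha$ with a part equal to $i$ (set $\tau(r,c)=0$ outside $\alpha$), let $r_1$ be the largest index with $\alpha_{r_1}=i$, and for $j\geq2$ let $r_j$ be the largest $r<r_{j-1}$ with $\tau(r,i)>\tau(r_{j-1},i)\geq\tau(r,i+1)$, ending with $r_k$. Then $\phi_{i+1}(\tau)$ is obtained by placing, for $j=k,\ldots,2$, the original entry $\tau(r_{j-1},i)$ into box $(r_j,i)$, and deleting box $(r_1,i)$ (and the row, if empty); the entry $\tau(r_k,i)$ exits. *)

theory Defs
  imports Main
begin

text \<open>For SSRTs (French convention) the first list element
is the bottom row (row 1); for SSRCTs (reverse composition diagrams) the first list element
is the top row (row 1). Rows and columns are numbered from 1. Entries outside the diagram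
are read as 0.\<close>

type_synonym tableau = "nat list list"

definition in_diag :: "tableau \<Rightarrow> nat \<Rightarrow> nat \<Rightarrow> bool" where
  "in_diag T r c \<longleftrightarrow> 1 \<le> r \<and> r \<le> length T \<and> 1 \<le> c \<and> c \<le> length (T ! (r - 1))"

definition ent :: "tableau \<Rightarrow> nat \<Rightarrow> nat \<Rightarrow> nat" where
  "ent T r c = (if in_diag T r c then T ! (r - 1) ! (c - 1) else 0)"

definition is_SSRT :: "tableau \<Rightarrow> bool" where
  "is_SSRT T \<longleftrightarrow>
     (\<forall>row\<in>set T. row \<noteq> []) \<and> sorted_wrt (\<ge>) (map length T) \<and>
     (\<forall>row\<in>set T. \<forall>x\<in>set row. 0 < x) \<and>
     (\<forall>r c. 1 \<le> c \<and> in_diag T r (c + 1) \<longrightarrow> ent T r (c + 1) \<le> ent T r c) \<and>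
     (\<forall>r c. 1 \<le> r \<and> in_diag T (r + 1) c \<longrightarrow> ent T (r + 1) c < ent T r c)"

definition addable_node :: "tableau \<Rightarrow> nat \<Rightarrow> nat \<Rightarrow> bool" where
  "addable_node T r c \<longleftrightarrow> 1 \<le> r \<and> 1 \<le> c \<and> \<not> in_diag T r c \<and>
     (c = 1 \<or> in_diag T r (c - 1)) \<and> (r = 1 \<or> in_diag T (r - 1) c)"

definition has_addable_in_col :: "tableau \<Rightarrow> nat \<Rightarrow> bool" where
  "has_addable_in_col T c \<longleftrightarrow> (\<exists>r. addable_node T r c)"

definition col_len :: "tableau \<Rightarrow> nat \<Rightarrow> nat" where
  "col_len T c = length (filter (\<lambda>row. c \<le> length row) T)"

text \<open>The row \<open>r\<close> of the entry that first moves horizontally: largest \<open>r\<close> with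
  \<open>(r,i) \<in> \<lambda>\<close> and \<open>T(r,i) < T(r-1,i+1)\<close>, where \<open>T(0,i+1) = \<infinity>\<close>.\<close>
definition tjdt_row :: "nat \<Rightarrow> tableau \<Rightarrow> nat" where
  "tjdt_row k T = (GREATEST r. in_diag T r (k - 1) \<and>
                     (r = 1 \<or> ent T r (k - 1) < ent T (r - 1) k))"

text \<open>\<open>tjdt k T\<close> (with \<open>k = i + 1\<close>): remove \<open>T(r,i)\<close> and slide every entry of column \<open>i\<close>
  above it down by one row; the top box of column \<open>i\<close> disappears (and its row, if empty).\<close>
definition tjdt :: "nat \<Rightarrow> tableau \<Rightarrow> tableau" where
  "tjdt k T = (let c = k - 1; r0 = tjdt_row k T; h = col_len T c in
     filter (\<lambda>row. row \<noteq> [])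
       (map (\<lambda>p. let row = T ! (p - 1) in
                  if p < r0 then row
                  else if p < h then row[c - 1 := ent T (p + 1) c]
                  else if p = h then take (c - 1) row
                  else row) [1..<length T + 1]))"

definition is_SSRCT :: "tableau \<Rightarrow> bool" where
  "is_SSRCT \<tau> \<longleftrightarrow>
     (\<forall>row\<in>set \<tau>. row \<noteq> []) \<and>
     (\<forall>row\<in>set \<tau>. \<forall>x\<in>set row. 0 < x) \<and>
     (\<forall>r c. 1 \<le> c \<and> in_diag \<tau> r (c + 1) \<longrightarrow> ent \<tau> r (c + 1) \<le> ent \<tau> r c) \<and>
     (\<forall>r. 1 \<le> r \<and> r < length \<tau> \<longrightarrow> ent \<tau> r 1 < ent \<tau> (r + 1) 1) \<and>
     (\<forall>r s c. 1 \<le> c \<and> r < s \<and> in_diag \<tau> s (c + 1) \<and> in_diag \<tau> r c \<and>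
        ent \<tau> s (c + 1) \<le> ent \<tau> r c \<longrightarrow>
        in_diag \<tau> r (c + 1) \<and> ent \<tau> s (c + 1) < ent \<tau> r (c + 1))"

text \<open>The map \<open>\<rho>\<close>: entries of each column written in decreasing order from bottom to top,
  bottom-justified.\<close>
definition col_entries :: "tableau \<Rightarrow> nat \<Rightarrow> nat list" where
  "col_entries \<tau> c = [ent \<tau> r c. r \<leftarrow> [1..<length \<tau> + 1], in_diag \<tau> r c]"

definition col_sorted :: "tableau \<Rightarrow> nat \<Rightarrow> nat list" where
  "col_sorted \<tau> c = rev (sort (col_entries \<tau> c))"

definition rho :: "tableau \<Rightarrow> tableau" where
  "rho \<tau> = (let m = foldr max (map length \<tau>) 0 in
     map (\<lambda>r. map (\<lambda>c. col_sorted \<tau> c ! (r - 1))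
                   (filter (\<lambda>c. r \<le> length (col_sorted \<tau> c)) [1..<m + 1]))
         [1..<length \<tau> + 1])"

fun find_down :: "(nat \<Rightarrow> bool) \<Rightarrow> nat \<Rightarrow> nat option" where
  "find_down P 0 = None"
| "find_down P (Suc n) = (if P n then Some n else find_down P n)"

lemma find_down_less: "find_down P n = Some m \<Longrightarrow> m < n"
  by (induction n) (auto split: if_splits)

definition phi_cond :: "tableau \<Rightarrow> nat \<Rightarrow> nat \<Rightarrow> nat \<Rightarrow> bool" where
  "phi_cond \<tau> i rp r \<longleftrightarrow> 1 \<le> r \<and> ent \<tau> r i > ent \<tau> rp i \<and> ent \<tau> rp i \<ge> ent \<tau> r (i + 1)"

text \<open>\<open>phi_chain \<tau> i r\<^sub>1 = [r\<^sub>1, r\<^sub>2, ..., r\<^sub>k]\<close>: \<open>r\<^sub>j\<close> is the largest \<open>r < r\<^sub>j\<^sub>-\<^sub>1\<close> with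
  \<open>\<tau>(r,i) > \<tau>(r\<^sub>j\<^sub>-\<^sub>1,i) \<ge> \<tau>(r,i+1)\<close>.\<close>
function phi_chain :: "tableau \<Rightarrow> nat \<Rightarrow> nat \<Rightarrow> nat list" where
  "phi_chain \<tau> i r = (case find_down (phi_cond \<tau> i r) r of
       None \<Rightarrow> [r]
     | Some r' \<Rightarrow> r # phi_chain \<tau> i r')"
  by pat_completeness auto
termination
  by (relation "measure (\<lambda>(\<tau>, i, r). r)") (auto dest: find_down_less)

definition phi :: "nat \<Rightarrow> tableau \<Rightarrow> tableau" where
  "phi k \<tau> = (let i = k - 1;
       r1 = Max {r. 1 \<le> r \<and> r \<le> length \<tau> \<and> length (\<tau> ! (r - 1)) = i};
       cs = phi_chain \<tau> i r1 in
     filter (\<lambda>row. row \<noteq> [])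
       (map (\<lambda>p. let row = \<tau> ! (p - 1) in
                 if p = r1 then take (i - 1) row
                 else (case map_of (zip (tl cs) cs) p of
                         Some q \<Rightarrow> row[i - 1 := ent \<tau> q i]
                       | None \<Rightarrow> row)) [1..<length \<tau> + 1]))"

end

theory Submission
  imports Defs "HOL-Library.Multiset"
begin


declare upt_Suc[simp del]

lemma in_diagD: "in_diag X r c \<Longrightarrow> 1 \<le> r \<and> r \<le> length X \<and> 1 \<le> c \<and> c \<le> length (X!(r-1))"
  by (simp add: in_diag_def)

lemma ent_out[simp]: "\<not> in_diag X r c \<Longrightarrow> ent X r c = 0"
  by (simp add: ent_def)

lemma in_diag_left: "in_diag X r (Suc c) \<Longrightarrow> 1 \<le> c \<Longrightarrow> in_diag X r c"
  by (simp add: in_diag_def)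

lemma in_diag_left': "in_diag X r c \<Longrightarrow> 1 \<le> d \<Longrightarrow> d \<le> c \<Longrightarrow> in_diag X r d"
  by (simp add: in_diag_def)

lemma tab_eqI:
  assumes len: "length A = length B"
    and D: "\<And>r c. in_diag A r c = in_diag B r c"
    and E: "\<And>r c. ent A r c = ent B r c"
  shows "A = B"
proof (rule nth_equalityI[OF len])
  fix k assume k: "k < length A"
  have L: "length (A!k) = length (B!k)"
  proof (rule ccontr)
    assume ne: "length (A!k) \<noteq> length (B!k)"
    show False
    proof (cases "length (A!k) < length (B!k)")
      case True
      have "in_diag B (Suc k) (length (B!k))" using True k len by (simp add: in_diag_def)
      moreover have "\<not> in_diag A (Suc k) (length (B!k))" using True by (simp add: in_diag_def)
      ultimately show False using D by blast
    next
      case False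
      hence "length (B!k) < length (A!k)" using ne by simp
      hence "in_diag A (Suc k) (length (A!k)) \<and> \<not> in_diag B (Suc k) (length (A!k))"
        using k len by (simp add: in_diag_def)
      thus False using D by blast
    qed
  qed
  show "A!k = B!k"
  proof (rule nth_equalityI[OF L])
    fix j assume j: "j < length (A!k)"
    have "in_diag A (Suc k) (Suc j)" "in_diag B (Suc k) (Suc j)" using j k len L by (simp_all add: in_diag_def)
    thus "A!k!j = B!k!j" using E[of "Suc k" "Suc j"] by (simp add: ent_def)
  qed
qed

lemma concat_map_if_single: "concat (map (\<lambda>r. if P r then [f r] else []) xs) = map f (filter P xs)"
  by (induction xs) auto

lemma col_entries_alt:
  "col_entries X c = map (\<lambda>r. ent X r c) (filter (\<lambda>r. in_diag X r c) [1..<length X+1])"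
  unfolding col_entries_def by (simp add: concat_map_if_single)

lemma finite_in_diag: "finite {r. in_diag X r c}"
  by (rule finite_subset[of _ "{..length X}"]) (auto simp: in_diag_def)

lemma set_filter_in_diag: "set (filter (\<lambda>r. in_diag X r c) [1..<length X+1]) = {r. in_diag X r c}"
  by (auto simp: in_diag_def)

lemma mset_col_entries:
  "mset (col_entries X c) = image_mset (\<lambda>r. ent X r c) (mset_set {r. in_diag X r c})"
proof -
  have "mset (filter (\<lambda>r. in_diag X r c) [1..<length X+1]) = mset_set {r. in_diag X r c}"
    using mset_set_set[of "filter (\<lambda>r. in_diag X r c) [1..<length X+1]"] set_filter_in_diag[of X c]
    by simp
  thus ?thesis by (simp add: col_entries_alt del: mset_filter)
qed

lemma length_col_entries: "length (col_entries X c) = card {r. in_diag X r c}"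
  using arg_cong[OF mset_col_entries[of X c], of size] finite_in_diag[of X c]
  by (metis size_image_mset size_mset size_mset_set)

lemma length_col_sorted: "length (col_sorted X c) = card {r. in_diag X r c}"
  by (simp add: col_sorted_def length_col_entries)

lemma length_col_sorted_mono: "1 \<le> c \<Longrightarrow> c \<le> d \<Longrightarrow> length (col_sorted X d) \<le> length (col_sorted X c)"
  unfolding length_col_sorted
  by (rule card_mono[OF finite_in_diag]) (auto simp: in_diag_def)

lemma col_step: "1 \<le> c \<Longrightarrow> r \<le> length (col_sorted X (Suc c)) \<Longrightarrow> r \<le> length (col_sorted X c)"
  using length_col_sorted_mono[of c "Suc c" X] by simp

lemma foldr_max_ge: "x \<in> set xs \<Longrightarrow> x \<le> foldr max xs (0::nat)"
  by (induction xs) auto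

lemma col_sorted_beyond:
  "foldr max (map length X) 0 < c \<Longrightarrow> col_sorted X c = []"
proof -
  assume a: "foldr max (map length X) 0 < c"
  have "{r. in_diag X r c} = {}"
  proof (rule ccontr)
    assume "{r. in_diag X r c} \<noteq> {}"
    then obtain r where "in_diag X r c" by blast
    hence "X!(r-1) \<in> set X" "c \<le> length (X!(r-1))" by (auto simp: in_diag_def)
    thus False using a foldr_max_ge[of "length (X!(r-1))" "map length X"] by auto
  qed
  hence "length (col_sorted X c) = 0" by (simp add: length_col_sorted)
  thus ?thesis by simp
qed

lemma antitone_all:
  assumes step: "\<And>c. 1 \<le> c \<Longrightarrow> P (Suc c) \<Longrightarrow> P c" and pc: "P c" and d: "1 \<le> d" "d \<le> c"
  shows "P d"
  using d(2) pc
proof (induction rule: inc_induct)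
  case base thus ?case .
next
  case (step n) thus ?case using assms(1)[of n] d(1) by simp
qed

lemma filter_antitone_upt:
  assumes "\<And>c. 1 \<le> c \<Longrightarrow> P (Suc c) \<Longrightarrow> P c"
  shows "filter P [1..<Suc M] = [1..<Suc (length (filter P [1..<Suc M]))]"
proof (induction M)
  case 0 thus ?case by simp
next
  case (Suc M)
  show ?case
  proof (cases "P (Suc M)")
    case True
    have "\<forall>x\<in>set [1..<Suc (Suc M)]. P x"
    proof
      fix x assume "x \<in> set [1..<Suc (Suc M)]"
      hence "1 \<le> x" "x \<le> Suc M" by auto
      thus "P x" using antitone_all[of P, OF assms True, of x] by blast
    qed
    hence "filter P [1..<Suc (Suc M)] = [1..<Suc (Suc M)]" by simp
    thus ?thesis by simp
  next
    case False
    hence "filter P [1..<Suc (Suc M)] = filter P [1..<Suc M]" by (simp add: upt_Suc)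
    thus ?thesis using Suc.IH by metis
  qed
qed

lemma rho_len: "length (rho X) = length X"
  by (simp add: rho_def Let_def del: upt_Suc)

lemma rho_row:
  assumes "1 \<le> r" "r \<le> length X"
  shows "rho X ! (r-1) = map (\<lambda>c. col_sorted X c ! (r-1)) [1..<Suc (length (filter (\<lambda>c. r \<le> length (col_sorted X c)) [1..<Suc (foldr max (map length X) 0)]))]"
proof -
  have "rho X ! (r-1) = map (\<lambda>c. col_sorted X c ! (r-1)) (filter (\<lambda>c. r \<le> length (col_sorted X c)) [1..<Suc (foldr max (map length X) 0)])"
    using assms unfolding rho_def Let_def by (subst nth_map) auto
  also have "filter (\<lambda>c. r \<le> length (col_sorted X c)) [1..<Suc (foldr max (map length X) 0)]
     = [1..<Suc (length (filter (\<lambda>c. r \<le> length (col_sorted X c)) [1..<Suc (foldr max (map length X) 0)]))]"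
    by (rule filter_antitone_upt) (rule col_step)
  finally show ?thesis .
qed

lemma rho_in_diag:
  "in_diag (rho X) r c \<longleftrightarrow> 1 \<le> r \<and> r \<le> length X \<and> 1 \<le> c \<and> r \<le> length (col_sorted X c)"
proof (cases "1 \<le> r \<and> r \<le> length X \<and> 1 \<le> c")
  case False thus ?thesis by (auto simp: in_diag_def rho_len)
next
  case True
  define M where "M = foldr max (map length X) 0"
  define F where "F = filter (\<lambda>c. r \<le> length (col_sorted X c)) [1..<Suc M]"
  have row: "rho X ! (r-1) = map (\<lambda>c. col_sorted X c ! (r-1)) [1..<Suc (length F)]"
    using rho_row[of r X] True by (simp add: M_def F_def)
  have FF: "F = [1..<Suc (length F)]" unfolding F_def
    by (rule filter_antitone_upt) (rule col_step)
  have "c \<le> length F \<longleftrightarrow> r \<le> length (col_sorted X c)"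
  proof
    assume "c \<le> length F"
    hence "c \<in> set F" using True by (subst FF) auto
    thus "r \<le> length (col_sorted X c)" by (simp add: F_def)
  next
    assume a: "r \<le> length (col_sorted X c)"
    have "c \<le> M"
    proof (rule ccontr)
      assume "\<not> c \<le> M"
      hence "col_sorted X c = []" using col_sorted_beyond[of X c] unfolding M_def by simp
      thus False using a True by simp
    qed
    hence "c \<in> set F" using a True by (simp add: F_def)
    thus "c \<le> length F" by (subst (asm) FF) auto
  qed
  thus ?thesis using True row by (simp add: in_diag_def rho_len)
qed

lemma rho_ent:
  "ent (rho X) r c = (if 1 \<le> r \<and> r \<le> length X \<and> 1 \<le> c \<and> r \<le> length (col_sorted X c) then col_sorted X c ! (r-1) else 0)"
proof (cases "in_diag (rho X) r c")
  case False thus ?thesis using rho_in_diag[of X r c] by auto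
next
  case True
  hence T: "1 \<le> r \<and> r \<le> length X \<and> 1 \<le> c \<and> r \<le> length (col_sorted X c)" using rho_in_diag by blast
  define L where "L = length (filter (\<lambda>c. r \<le> length (col_sorted X c)) [1..<Suc (foldr max (map length X) 0)])"
  have row: "rho X ! (r-1) = map (\<lambda>c. col_sorted X c ! (r-1)) [1..<Suc L]"
    using rho_row[of r X] T by (simp add: L_def)
  have "c \<le> length (rho X ! (r-1))" using True by (simp add: in_diag_def)
  hence cL: "c - 1 < L" using row T by (simp, arith)
  have "ent (rho X) r c = rho X ! (r-1) ! (c-1)" using True by (simp add: ent_def)
  also have "\<dots> = col_sorted X c ! (r-1)" unfolding row using cL T by (simp add: nth_upt)
  finally show ?thesis using T by simp
qed


declare phi_chain.simps[simp del]

lemma fd_Some: "find_down P n = Some m \<Longrightarrow> P m \<and> m < n \<and> (\<forall>k. m < k \<and> k < n \<longrightarrow> \<not> P k)"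
proof (induction n)
  case 0 thus ?case by simp
next
  case (Suc n)
  show ?case
  proof (cases "P n")
    case True thus ?thesis using Suc.prems by auto
  next
    case False
    hence "find_down P n = Some m" using Suc.prems by simp
    hence "P m \<and> m < n \<and> (\<forall>k. m < k \<and> k < n \<longrightarrow> \<not> P k)" using Suc.IH by blast
    thus ?thesis using False less_Suc_eq by auto
  qed
qed

lemma fd_None: "find_down P n = None \<Longrightarrow> k < n \<Longrightarrow> \<not> P k"
proof (induction n)
  case 0 thus ?case by simp
next
  case (Suc n) thus ?case by (cases "P n") (auto simp: less_Suc_eq)
qed

lemma pc_None: "find_down (phi_cond \<tau> i r) r = None \<Longrightarrow> phi_chain \<tau> i r = [r]"
  by (subst phi_chain.simps) simp

lemma pc_Some: "find_down (phi_cond \<tau> i r) r = Some r' \<Longrightarrow> phi_chain \<tau> i r = r # phi_chain \<tau> i r'"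
  by (subst phi_chain.simps) simp

lemma pc_props:
  "phi_chain \<tau> i r \<noteq> [] \<and> phi_chain \<tau> i r ! 0 = r \<and>
   (\<forall>j. Suc j < length (phi_chain \<tau> i r) \<longrightarrow>
      find_down (phi_cond \<tau> i (phi_chain \<tau> i r ! j)) (phi_chain \<tau> i r ! j) = Some (phi_chain \<tau> i r ! Suc j)) \<and>
   find_down (phi_cond \<tau> i (last (phi_chain \<tau> i r))) (last (phi_chain \<tau> i r)) = None"
proof (induction \<tau> i r rule: phi_chain.induct)
  case (1 \<tau> i r)
  show ?case
  proof (cases "find_down (phi_cond \<tau> i r) r")
    case None thus ?thesis using pc_None[OF None] by simp
  next
    case (Some r')
    have eq: "phi_chain \<tau> i r = r # phi_chain \<tau> i r'" using pc_Some[OF Some] .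
    have IH: "phi_chain \<tau> i r' \<noteq> [] \<and> phi_chain \<tau> i r' ! 0 = r' \<and>
   (\<forall>j. Suc j < length (phi_chain \<tau> i r') \<longrightarrow>
      find_down (phi_cond \<tau> i (phi_chain \<tau> i r' ! j)) (phi_chain \<tau> i r' ! j) = Some (phi_chain \<tau> i r' ! Suc j)) \<and>
   find_down (phi_cond \<tau> i (last (phi_chain \<tau> i r'))) (last (phi_chain \<tau> i r')) = None"
      using 1 Some by simp
    have A: "\<forall>j. Suc j < length (phi_chain \<tau> i r) \<longrightarrow>
      find_down (phi_cond \<tau> i (phi_chain \<tau> i r ! j)) (phi_chain \<tau> i r ! j) = Some (phi_chain \<tau> i r ! Suc j)"
    proof (intro allI impI)
      fix j assume j: "Suc j < length (phi_chain \<tau> i r)"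
      show "find_down (phi_cond \<tau> i (phi_chain \<tau> i r ! j)) (phi_chain \<tau> i r ! j) = Some (phi_chain \<tau> i r ! Suc j)"
      proof (cases j)
        case 0 thus ?thesis using eq IH Some by simp
      next
        case (Suc j') thus ?thesis using eq IH j by simp
      qed
    qed
    show ?thesis using eq IH A by simp
  qed
qed

lemma sorted_wrt_gt_chain:
  assumes "\<And>j. Suc j < length xs \<Longrightarrow> (xs ! Suc j :: nat) < xs ! j"
  shows "sorted_wrt (>) xs"
  using assms by (subst sorted_wrt_iff_nth_Suc_transp) (auto simp: transp_def)

lemma sorted_wrt_lt_chain:
  assumes "\<And>j. Suc j < length xs \<Longrightarrow> (xs ! j :: nat) < xs ! Suc j"
  shows "sorted_wrt (<) xs"
  using assms by (subst sorted_wrt_iff_nth_Suc_transp) (auto simp: transp_def)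

locale stp =
  fixes \<tau> :: tableau and i :: nat
  assumes ssrct: "is_SSRCT \<tau>" and i1: "1 \<le> i"
    and ex_row: "\<exists>r. 1 \<le> r \<and> r \<le> length \<tau> \<and> length (\<tau>!(r-1)) = i"
begin

definition "n = length \<tau>"
definition "a r = ent \<tau> r i"
definition "b r = ent \<tau> r (Suc i)"
definition "D r = in_diag \<tau> r i"
definition "D' r = in_diag \<tau> r (Suc i)"
definition "r1 = Max {r. 1 \<le> r \<and> r \<le> length \<tau> \<and> length (\<tau> ! (r - 1)) = i}"
definition "ch = phi_chain \<tau> i r1"
definition "cover v r \<longleftrightarrow> b r \<le> v \<and> v < a r"
definition "x = a (last ch)"

lemma row_dec0: "\<forall>r c. 1 \<le> c \<and> in_diag \<tau> r (c + 1) \<longrightarrow> ent \<tau> r (c + 1) \<le> ent \<tau> r c"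
  using ssrct[unfolded is_SSRCT_def, THEN conjunct2, THEN conjunct2, THEN conjunct1] .

lemma col10: "\<forall>r. 1 \<le> r \<and> r < length \<tau> \<longrightarrow> ent \<tau> r 1 < ent \<tau> (r + 1) 1"
  using ssrct[unfolded is_SSRCT_def, THEN conjunct2, THEN conjunct2, THEN conjunct2, THEN conjunct1] .

lemma triple0: "\<forall>r s c. 1 \<le> c \<and> r < s \<and> in_diag \<tau> s (c + 1) \<and> in_diag \<tau> r c \<and>
        ent \<tau> s (c + 1) \<le> ent \<tau> r c \<longrightarrow>
        in_diag \<tau> r (c + 1) \<and> ent \<tau> s (c + 1) < ent \<tau> r (c + 1)"
  using ssrct[unfolded is_SSRCT_def, THEN conjunct2, THEN conjunct2, THEN conjunct2, THEN conjunct2] .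

lemma row_dec: "in_diag \<tau> r (Suc c) \<Longrightarrow> 1 \<le> c \<Longrightarrow> ent \<tau> r (Suc c) \<le> ent \<tau> r c"
  using row_dec0 by (metis Suc_eq_plus1)

lemma triple: "1 \<le> c \<Longrightarrow> r < s \<Longrightarrow> in_diag \<tau> s (Suc c) \<Longrightarrow> in_diag \<tau> r c \<Longrightarrow> ent \<tau> s (Suc c) \<le> ent \<tau> r c
   \<Longrightarrow> in_diag \<tau> r (Suc c) \<and> ent \<tau> s (Suc c) < ent \<tau> r (Suc c)"
  using triple0 by (metis Suc_eq_plus1)

lemma rows_ne: "row \<in> set \<tau> \<Longrightarrow> row \<noteq> []"
  using ssrct[unfolded is_SSRCT_def, THEN conjunct1] by blast

lemma pos0: "\<forall>row\<in>set \<tau>. \<forall>x\<in>set row. 0 < x"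
  using ssrct[unfolded is_SSRCT_def, THEN conjunct2, THEN conjunct1] .

lemma ent_pos: "in_diag \<tau> r c \<Longrightarrow> 0 < ent \<tau> r c"
proof -
  assume d: "in_diag \<tau> r c"
  hence "\<tau>!(r-1) \<in> set \<tau>" "\<tau>!(r-1)!(c-1) \<in> set (\<tau>!(r-1))" by (auto simp: in_diag_def)
  thus ?thesis using pos0 d unfolding ent_def by auto
qed

lemma ent_pos_iff: "0 < ent \<tau> r c \<longleftrightarrow> in_diag \<tau> r c"
  using ent_pos ent_out by (metis less_irrefl)

lemma col1_step: "1 \<le> r \<Longrightarrow> r < length \<tau> \<Longrightarrow> ent \<tau> r 1 < ent \<tau> (Suc r) 1"
  using col10 by (metis Suc_eq_plus1)

lemma col1_mono: "1 \<le> r \<Longrightarrow> r < s \<Longrightarrow> s \<le> length \<tau> \<Longrightarrow> ent \<tau> r 1 < ent \<tau> s 1"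
proof (induction s rule: less_induct)
  case (less s)
  show ?case
  proof (cases "Suc r = s")
    case True thus ?thesis using col1_step less by auto
  next
    case False
    then obtain s' where s: "s = Suc s'" "r < s'" using less by (cases s) auto
    have "ent \<tau> r 1 < ent \<tau> s' 1" using less s by auto
    also have "\<dots> < ent \<tau> s 1" using col1_step[of s'] s less by auto
    finally show ?thesis .
  qed
qed

lemma col_distinct:
  assumes "in_diag \<tau> r c" "in_diag \<tau> s c" "r < s"
  shows "ent \<tau> r c \<noteq> ent \<tau> s c"
proof (cases "c = 1")
  case True thus ?thesis using col1_mono[of r s] assms by (auto simp: in_diag_def)
next
  case False
  then obtain c' where c: "c = Suc c'" "1 \<le> c'" using assms by (cases c) (auto simp: in_diag_def)
  show ?thesis
  proof
    assume eq: "ent \<tau> r c = ent \<tau> s c"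
    have "in_diag \<tau> r c'" using assms c by (auto simp: in_diag_def)
    moreover have "ent \<tau> s (Suc c') \<le> ent \<tau> r c'" using eq row_dec[of r c'] assms c by simp
    ultimately have "ent \<tau> s (Suc c') < ent \<tau> r (Suc c')" using triple[of c' r s] assms c by blast
    thus False using eq c by simp
  qed
qed

lemma distinct_col_entries: "distinct (col_entries \<tau> c)"
proof -
  have "inj_on (\<lambda>r. ent \<tau> r c) (set (filter (\<lambda>r. in_diag \<tau> r c) [1..<length \<tau>+1]))"
  proof (rule inj_onI)
    fix r s assume "r \<in> set (filter (\<lambda>r. in_diag \<tau> r c) [1..<length \<tau>+1])"
      "s \<in> set (filter (\<lambda>r. in_diag \<tau> r c) [1..<length \<tau>+1])" "ent \<tau> r c = ent \<tau> s c"
    thus "r = s" using col_distinct[of r c s] col_distinct[of s c r] by (cases r s rule: linorder_cases) auto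
  qed
  thus ?thesis by (simp add: col_entries_alt distinct_map)
qed

end


context stp begin

lemma S_fin: "finite {r. 1 \<le> r \<and> r \<le> length \<tau> \<and> length (\<tau> ! (r - 1)) = i}"
  by (rule finite_subset[of _ "{..length \<tau>}"]) auto

lemma r1_in: "1 \<le> r1 \<and> r1 \<le> n \<and> length (\<tau> ! (r1 - 1)) = i"
proof -
  have "{r. 1 \<le> r \<and> r \<le> length \<tau> \<and> length (\<tau> ! (r - 1)) = i} \<noteq> {}" using ex_row by blast
  from Max_in[OF S_fin this] show ?thesis unfolding r1_def n_def by blast
qed

lemma r1_max: "r1 < r \<Longrightarrow> r \<le> n \<Longrightarrow> length (\<tau> ! (r - 1)) \<noteq> i"
proof
  assume "r1 < r" "r \<le> n" "length (\<tau> ! (r - 1)) = i"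
  hence "r \<le> r1" unfolding r1_def n_def using S_fin r1_in by (intro Max_ge) auto
  thus False using \<open>r1 < r\<close> by simp
qed

lemma D_r1: "D r1" using r1_in i1 by (simp add: D_def in_diag_def n_def)
lemma not_D'_r1: "\<not> D' r1" using r1_in by (simp add: D'_def in_diag_def)

lemma below_r1: "r1 < r \<Longrightarrow> D r \<Longrightarrow> D' r"
  using r1_max[of r] by (simp add: D_def D'_def in_diag_def n_def)

lemma D'_D: "D' r \<Longrightarrow> D r" using i1 by (simp add: D_def D'_def in_diag_def)

lemma b_le_a: "b r \<le> a r"
proof (cases "D' r")
  case True thus ?thesis using row_dec[of r i] i1 by (simp add: a_def b_def D'_def)
next
  case False thus ?thesis by (simp add: b_def D'_def)
qed

lemma phi_cond_cover: "phi_cond \<tau> i rp r \<longleftrightarrow> 1 \<le> r \<and> cover (a rp) r"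
  by (auto simp: phi_cond_def cover_def a_def b_def)

lemma cover_D: "cover v r \<Longrightarrow> D r"
  using ent_pos_iff[of r i] by (auto simp: cover_def a_def D_def)

lemma D_bounds: "D r \<Longrightarrow> 1 \<le> r \<and> r \<le> n"
  by (simp add: D_def in_diag_def n_def)

lemma ch_basic: "ch \<noteq> [] \<and> ch ! 0 = r1 \<and>
   (\<forall>j. Suc j < length ch \<longrightarrow> find_down (phi_cond \<tau> i (ch ! j)) (ch ! j) = Some (ch ! Suc j)) \<and>
   find_down (phi_cond \<tau> i (last ch)) (last ch) = None"
  unfolding ch_def by (rule pc_props)

lemma ch_ne: "ch \<noteq> []" using ch_basic by blast
lemma ch0: "ch ! 0 = r1" using ch_basic by blast

lemma ch_step:
  assumes "Suc j < length ch"
  shows "cover (a (ch ! j)) (ch ! Suc j) \<and> 1 \<le> ch ! Suc j \<and> ch ! Suc j < ch ! j \<and>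
         (\<forall>k. ch ! Suc j < k \<and> k < ch ! j \<longrightarrow> \<not> cover (a (ch ! j)) k)"
proof -
  have "find_down (phi_cond \<tau> i (ch ! j)) (ch ! j) = Some (ch ! Suc j)" using ch_basic assms by blast
  from fd_Some[OF this] show ?thesis unfolding phi_cond_cover by auto
qed

lemma ch_last: "k < last ch \<Longrightarrow> 1 \<le> k \<Longrightarrow> \<not> cover (a (last ch)) k"
proof -
  assume "k < last ch" "1 \<le> k"
  have "find_down (phi_cond \<tau> i (last ch)) (last ch) = None" using ch_basic by blast
  from fd_None[OF this \<open>k < last ch\<close>] show ?thesis using \<open>1 \<le> k\<close> unfolding phi_cond_cover by auto
qed

lemma ch_D: "j < length ch \<Longrightarrow> D (ch ! j) \<and> ch ! j \<le> r1"
proof (induction j)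
  case 0 thus ?case using ch0 D_r1 by simp
next
  case (Suc j)
  have "cover (a (ch ! j)) (ch ! Suc j) \<and> ch ! Suc j < ch ! j" using ch_step Suc.prems by blast
  thus ?case using cover_D Suc by fastforce
qed

lemma ch_a_step: "Suc j < length ch \<Longrightarrow> a (ch ! j) < a (ch ! Suc j)"
  using ch_step[of j] by (simp add: cover_def)

lemma ch_sorted: "sorted_wrt (>) ch"
  by (rule sorted_wrt_gt_chain) (use ch_step in blast)

lemma ch_a_sorted: "sorted_wrt (<) (map a ch)"
  by (rule sorted_wrt_lt_chain) (simp add: ch_a_step)


lemma ch_lt: "j < k \<Longrightarrow> k < length ch \<Longrightarrow> ch ! k < ch ! j"
  using ch_sorted by (simp add: sorted_wrt_iff_nth_less)

lemma ch_distinct: "distinct ch"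
  unfolding distinct_conv_nth
proof (intro allI impI)
  fix j k assume "j < length ch" "k < length ch" "j \<noteq> k"
  thus "ch ! j \<noteq> ch ! k" using ch_lt[of j k] ch_lt[of k j] by (cases "j < k") auto
qed

lemma ch_a_lt: "j < k \<Longrightarrow> k < length ch \<Longrightarrow> a (ch ! j) < a (ch ! k)"
  using ch_a_sorted by (simp add: sorted_wrt_iff_nth_less)

lemma NC: "j < length ch \<Longrightarrow> ch ! j < r \<Longrightarrow> \<not> cover (a (ch ! j)) r"
proof (induction j arbitrary: r)
  case 0
  show ?case
  proof
    assume cv: "cover (a (ch ! 0)) r"
    hence Dr: "D r" using cover_D by blast
    have r1r: "r1 < r" using 0 ch0 by simp
    hence "D' r" using below_r1 Dr by blast
    moreover have "b r \<le> a r1" using cv ch0 by (simp add: cover_def)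
    ultimately have "D' r1" using triple[of i r1 r] i1 r1r D_r1
      by (simp add: D_def D'_def a_def b_def)
    thus False using not_D'_r1 by simp
  qed
next
  case (Suc j)
  define rp where "rp = ch ! j"
  define rr where "rr = ch ! Suc j"
  have st: "cover (a rp) rr \<and> 1 \<le> rr \<and> rr < rp \<and> (\<forall>k. rr < k \<and> k < rp \<longrightarrow> \<not> cover (a rp) k)"
    using ch_step[of j] Suc.prems unfolding rp_def rr_def by blast
  show ?case
  proof
    assume cv: "cover (a (ch ! Suc j)) r"
    have rr_r: "rr < r" using Suc.prems rr_def by simp
    have "b r \<le> a rp"
    proof (cases "D' r")
      case False thus ?thesis by (simp add: b_def D'_def)
    next
      case True
      have "b r \<le> a rr" using cv rr_def by (simp add: cover_def)
      hence "b r < b rr" using triple[of i rr r] i1 rr_r True cover_D[of "a rp" rr] st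
        by (simp add: D_def D'_def a_def b_def)
      thus ?thesis using st by (simp add: cover_def)
    qed
    moreover have "a rp < a r" using cv st rr_def by (simp add: cover_def)
    ultimately have cvp: "cover (a rp) r" by (simp add: cover_def)
    show False
    proof (cases "r < rp")
      case True thus False using st rr_r cvp by blast
    next
      case False
      show False
      proof (cases "r = rp")
        case True thus False using cvp by (simp add: cover_def)
      next
        case False
        hence "rp < r" using \<open>\<not> r < rp\<close> by simp
        thus False using Suc.IH[of r] Suc.prems cvp rp_def by simp
      qed
    qed
  qed
qed

lemma last_ch: "last ch = ch ! (length ch - 1)" using ch_ne by (simp add: last_conv_nth)

lemma x_no_cover: "\<not> cover x r"
proof
  assume cv: "cover x r"
  have Dr: "D r" using cv cover_D by blast
  consider "r < last ch" | "r = last ch" | "last ch < r" by linarith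
  thus False
  proof cases
    case 1 thus False using ch_last[of r] cv D_bounds[OF Dr] by (simp add: x_def)
  next
    case 2 thus False using cv by (simp add: x_def cover_def)
  next
    case 3 thus False using NC[of "length ch - 1" r] cv ch_ne by (simp add: x_def last_ch)
  qed
qed

lemma cover_below_j: "j < length ch \<Longrightarrow> v < a (ch ! j) \<Longrightarrow> \<exists>r. cover v r"
proof (induction j)
  case 0
  have "b r1 = 0" using not_D'_r1 by (simp add: b_def D'_def)
  hence "cover v r1" using 0 ch0 by (simp add: cover_def)
  thus ?case by blast
next
  case (Suc j)
  show ?case
  proof (cases "v < a (ch ! j)")
    case True thus ?thesis using Suc by simp
  next
    case False
    have "cover (a (ch ! j)) (ch ! Suc j)" using ch_step Suc.prems by blast
    hence "cover v (ch ! Suc j)" using False Suc.prems by (auto simp: cover_def)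
    thus ?thesis by blast
  qed
qed

lemma cover_below: "v < x \<Longrightarrow> \<exists>r. cover v r"
  using cover_below_j[of "length ch - 1" v] ch_ne by (simp add: x_def last_ch)

end


definition cnt :: "nat \<Rightarrow> nat list \<Rightarrow> nat" where
  "cnt v ys = length (filter (\<lambda>y. v < y) ys)"

lemma Fcount_gt:
  assumes s: "sorted_wrt (>) ys" and j: "j < length ys" and v: "v < ys ! j"
  shows "j < cnt v ys"
proof -
  have "\<forall>y\<in>set (take (Suc j) ys). v < y"
  proof
    fix y assume "y \<in> set (take (Suc j) ys)"
    then obtain k where k: "k < length (take (Suc j) ys)" "y = take (Suc j) ys ! k" by (auto simp: in_set_conv_nth)
    hence kk: "k \<le> j" "y = ys ! k" by auto
    show "v < y"
    proof (cases "k = j")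
      case True thus ?thesis using v kk by simp
    next
      case False thus ?thesis using sorted_wrt_nth_less[OF s, of k j] kk j v by simp
    qed
  qed
  hence "filter (\<lambda>y. v < y) (take (Suc j) ys) = take (Suc j) ys" by simp
  hence "length (filter (\<lambda>y. v < y) (take (Suc j) ys)) = Suc j" using j by simp
  moreover have "filter (\<lambda>y. v < y) ys = filter (\<lambda>y. v < y) (take (Suc j) ys) @ filter (\<lambda>y. v < y) (drop (Suc j) ys)"
    by (metis append_take_drop_id filter_append)
  ultimately show ?thesis unfolding cnt_def by simp
qed

lemma Fcount_le:
  assumes s: "sorted_wrt (>) ys" and j: "j < length ys" and v: "ys ! j \<le> v"
  shows "cnt v ys \<le> j"
proof -
  have "\<forall>y\<in>set (drop j ys). \<not> v < y"
  proof
    fix y assume "y \<in> set (drop j ys)"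
    then obtain k where k: "k < length (drop j ys)" "y = drop j ys ! k" by (auto simp: in_set_conv_nth)
    hence kk: "j + k < length ys" "y = ys ! (j + k)" by auto
    show "\<not> v < y"
    proof (cases "k = 0")
      case True thus ?thesis using v kk by simp
    next
      case False thus ?thesis using sorted_wrt_nth_less[OF s, of j "j+k"] kk j v by simp
    qed
  qed
  hence "filter (\<lambda>y. v < y) (drop j ys) = []" by (simp add: filter_empty_conv)
  moreover have "filter (\<lambda>y. v < y) ys = filter (\<lambda>y. v < y) (take j ys) @ filter (\<lambda>y. v < y) (drop j ys)"
    by (metis append_take_drop_id filter_append)
  ultimately have "cnt v ys = length (filter (\<lambda>y. v < y) (take j ys))" unfolding cnt_def by simp
  also have "\<dots> \<le> length (take j ys)" by (rule length_filter_le)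
  also have "\<dots> \<le> j" by simp
  finally show ?thesis .
qed

lemma Fcount_eq:
  assumes s: "sorted_wrt (>) ys" and j: "j < length ys"
  shows "cnt (ys ! j) ys = j"
proof -
  have "cnt (ys ! j) ys \<le> j" using Fcount_le[OF s j] by simp
  moreover have "j \<le> cnt (ys ! j) ys"
  proof (cases j)
    case 0 thus ?thesis by simp
  next
    case (Suc j')
    have "ys ! j < ys ! j'" using sorted_wrt_nth_less[OF s, of j' j] Suc j by simp
    thus ?thesis using Fcount_gt[OF s, of j' "ys ! j"] Suc j by simp
  qed
  ultimately show ?thesis by simp
qed

lemma cnt_le_length: "cnt v ys \<le> length ys"
  by (simp add: cnt_def)

context stp begin

lemma cs_sorted: "sorted_wrt (>) (col_sorted \<tau> c)"
proof -
  have "sorted_wrt (<) (sort (col_entries \<tau> c))"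
    using distinct_col_entries[of c] by (simp add: strict_sorted_iff)
  thus ?thesis by (simp add: col_sorted_def sorted_wrt_rev)
qed

lemma cnt_col: "cnt v (col_sorted \<tau> c) = card {r. in_diag \<tau> r c \<and> v < ent \<tau> r c}"
proof -
  have "mset (filter (\<lambda>y. v < y) (col_sorted \<tau> c)) = mset (filter (\<lambda>y. v < y) (col_entries \<tau> c))"
    by (simp add: col_sorted_def)
  hence "cnt v (col_sorted \<tau> c) = length (filter (\<lambda>y. v < y) (col_entries \<tau> c))"
    unfolding cnt_def by (metis size_mset)
  also have "\<dots> = length (filter (\<lambda>r. in_diag \<tau> r c \<and> v < ent \<tau> r c) [1..<length \<tau>+1])"
    by (simp add: col_entries_alt filter_map o_def)
  also have "\<dots> = card (set (filter (\<lambda>r. in_diag \<tau> r c \<and> v < ent \<tau> r c) [1..<length \<tau>+1]))"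
    by (rule distinct_card[symmetric]) simp
  also have "set (filter (\<lambda>r. in_diag \<tau> r c \<and> v < ent \<tau> r c) [1..<length \<tau>+1]) = {r. in_diag \<tau> r c \<and> v < ent \<tau> r c}"
    by (auto simp: in_diag_def)
  finally show ?thesis .
qed

definition "cA v = card {r. D r \<and> v < a r}"
definition "cB v = card {r. D' r \<and> v < b r}"

lemma cA_cnt: "cnt v (col_sorted \<tau> i) = cA v"
  by (simp add: cnt_col cA_def D_def a_def)
lemma cB_cnt: "cnt v (col_sorted \<tau> (Suc i)) = cB v"
  by (simp add: cnt_col cB_def D'_def b_def)

lemma finA: "finite {r. D r \<and> v < a r}"
  by (rule finite_subset[of _ "{..n}"]) (auto dest: D_bounds)

lemma B_sub: "{r. D' r \<and> v < b r} \<subseteq> {r. D r \<and> v < a r}"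
  using D'_D b_le_a by (auto intro: less_le_trans)

lemma cB_le: "cB v \<le> cA v"
  unfolding cA_def cB_def by (rule card_mono[OF finA B_sub])

lemma cB_lt: "cB v < cA v \<longleftrightarrow> (\<exists>r. cover v r)"
proof
  assume "cB v < cA v"
  hence "{r. D' r \<and> v < b r} \<noteq> {r. D r \<and> v < a r}" unfolding cA_def cB_def by auto
  then obtain r where "D r \<and> v < a r" "\<not> (D' r \<and> v < b r)" using B_sub by blast
  hence "cover v r" by (cases "D' r") (auto simp: cover_def b_def D'_def)
  thus "\<exists>r. cover v r" by blast
next
  assume "\<exists>r. cover v r"
  then obtain r where cv: "cover v r" by blast
  hence "r \<in> {r. D r \<and> v < a r}" "r \<notin> {r. D' r \<and> v < b r}" using cover_D by (auto simp: cover_def)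
  hence "{r. D' r \<and> v < b r} \<subset> {r. D r \<and> v < a r}" using B_sub by blast
  thus "cB v < cA v" unfolding cA_def cB_def by (rule psubset_card_mono[OF finA])
qed

end


context stp begin

abbreviation "cs c \<equiv> col_sorted \<tau> c"

lemma len_cs_le_n: "length (cs c) \<le> n"
proof -
  have "card {r. in_diag \<tau> r c} \<le> card {1..n}"
    by (rule card_mono) (auto simp: in_diag_def n_def)
  thus ?thesis by (simp add: length_col_sorted)
qed

lemma T_in_diag: "in_diag (rho \<tau>) r c \<longleftrightarrow> 1 \<le> r \<and> 1 \<le> c \<and> r \<le> length (cs c)"
  using rho_in_diag[of \<tau> r c] len_cs_le_n[of c] by (auto simp: n_def)

lemma T_ent: "ent (rho \<tau>) r c = (if 1 \<le> r \<and> 1 \<le> c \<and> r \<le> length (cs c) then cs c ! (r - 1) else 0)"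
  using rho_ent[of \<tau> r c] len_cs_le_n[of c] by (auto simp: n_def)

lemma x_in_col: "x \<in> set (cs i)"
proof -
  have l: "last ch = ch ! (length ch - 1)" by (rule last_ch)
  have "D (last ch)" using ch_D[of "length ch - 1"] ch_ne l by simp
  hence "last ch \<in> set (filter (\<lambda>r. in_diag \<tau> r i) [1..<length \<tau>+1])"
    by (auto simp: D_def in_diag_def)
  hence "x \<in> set (col_entries \<tau> i)" by (auto simp: col_entries_alt x_def a_def)
  thus ?thesis by (simp add: col_sorted_def)
qed

definition "p0 = (SOME j. j < length (cs i) \<and> cs i ! j = x)"

lemma p0: "p0 < length (cs i) \<and> cs i ! p0 = x"
proof -
  have "\<exists>j. j < length (cs i) \<and> cs i ! j = x" using x_in_col by (simp add: in_set_conv_nth)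
  thus ?thesis unfolding p0_def by (rule someI_ex)
qed

lemma tjdt_row_eq: "tjdt_row (Suc i) (rho \<tau>) = Suc p0"
proof -
  let ?Q = "\<lambda>r. in_diag (rho \<tau>) r i \<and> (r = 1 \<or> ent (rho \<tau>) r i < ent (rho \<tau>) (r - 1) (Suc i))"
  have sA: "sorted_wrt (>) (cs i)" and sB: "sorted_wrt (>) (cs (Suc i))" using cs_sorted by auto
  have Qp: "?Q (Suc p0)"
  proof -
    have d: "in_diag (rho \<tau>) (Suc p0) i" using p0 i1 by (simp add: T_in_diag)
    show ?thesis
    proof (cases p0)
      case 0 thus ?thesis using d by simp
    next
      case (Suc q)
      have "cA x = p0" using Fcount_eq[OF sA, of p0] p0 cA_cnt by simp
      moreover have "\<not> cB x < cA x" using cB_lt x_no_cover by blast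
      ultimately have cb: "cnt x (cs (Suc i)) = p0" using cB_le[of x] cB_cnt by simp
      hence qg: "q < length (cs (Suc i))" using cnt_le_length[of x "cs (Suc i)"] Suc by simp
      have "x < cs (Suc i) ! q"
      proof (rule ccontr)
        assume "\<not> x < cs (Suc i) ! q"
        hence "cnt x (cs (Suc i)) \<le> q" using Fcount_le[OF sB qg] by simp
        thus False using cb Suc by simp
      qed
      moreover have "ent (rho \<tau>) (Suc p0) i = x" using p0 i1 by (simp add: T_ent)
      moreover have "ent (rho \<tau>) p0 (Suc i) = cs (Suc i) ! q" using qg Suc by (simp add: T_ent)
      ultimately show ?thesis using d by simp
    qed
  qed
  have Qle: "r \<le> Suc p0" if Qr: "?Q r" for r
  proof (rule ccontr)
    assume "\<not> r \<le> Suc p0"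
    hence rp: "Suc p0 < r" by simp
    have "in_diag (rho \<tau>) r i" using Qr by simp
    hence rh: "r \<le> length (cs i)" "1 \<le> r" by (simp_all add: T_in_diag)
    define y where "y = cs i ! (r - 1)"
    have yx: "y < x" using sorted_wrt_nth_less[OF sA, of p0 "r - 1"] rp rh p0 y_def by simp
    have ey: "ent (rho \<tau>) r i = y" using rh i1 by (simp add: T_ent y_def)
    have lt: "y < ent (rho \<tau>) (r - 1) (Suc i)" using Qr rp ey by auto
    hence "ent (rho \<tau>) (r - 1) (Suc i) \<noteq> 0" by simp
    hence rg: "r - 1 \<le> length (cs (Suc i))" "1 \<le> r - 1" by (auto simp: T_ent split: if_splits)
    have "y < cs (Suc i) ! (r - 1 - 1)" using lt rg by (simp add: T_ent)
    hence "r - 1 - 1 < cnt y (cs (Suc i))" using Fcount_gt[OF sB, of "r - 1 - 1" y] rg by simp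
    hence "r - 1 \<le> cB y" using cB_cnt rg by simp
    moreover have "cA y = r - 1" using Fcount_eq[OF sA, of "r - 1"] rh cA_cnt y_def by simp
    ultimately have "\<not> cB y < cA y" by simp
    thus False using cB_lt cover_below yx by blast
  qed
  have "(GREATEST r. ?Q r) = Suc p0"
    by (rule Greatest_equality, rule Qp, rule Qle, assumption)
  thus ?thesis unfolding tjdt_row_def by simp
qed

end


lemma col_entries_snoc:
  "col_entries (X @ [row]) c = col_entries X c @ (if 1 \<le> c \<and> c \<le> length row then [row ! (c-1)] else [])"
proof -
  have A: "map (\<lambda>r. ent (X @ [row]) r c) (filter (\<lambda>r. in_diag (X @ [row]) r c) [1..<length X + 1])
     = map (\<lambda>r. ent X r c) (filter (\<lambda>r. in_diag X r c) [1..<length X + 1])"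
  proof -
    have f: "filter (\<lambda>r. in_diag (X @ [row]) r c) [1..<length X + 1] = filter (\<lambda>r. in_diag X r c) [1..<length X + 1]"
      by (rule filter_cong) (auto simp: in_diag_def nth_append)
    show ?thesis unfolding f
      by (rule map_cong) (auto simp: ent_def in_diag_def nth_append)
  qed
  have "[1..<length (X @ [row]) + 1] = [1..<length X + 1] @ [length X + 1]" by (simp add: upt_Suc)
  hence "col_entries (X @ [row]) c = map (\<lambda>r. ent (X @ [row]) r c) (filter (\<lambda>r. in_diag (X @ [row]) r c) [1..<length X + 1])
     @ map (\<lambda>r. ent (X @ [row]) r c) (filter (\<lambda>r. in_diag (X @ [row]) r c) [length X + 1])"
    by (simp add: col_entries_alt)
  also have "\<dots> = col_entries X c @ (if 1 \<le> c \<and> c \<le> length row then [row ! (c-1)] else [])"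
    unfolding A by (simp add: col_entries_alt in_diag_def ent_def)
  finally show ?thesis .
qed

lemma col_entries_rows:
  "1 \<le> c \<Longrightarrow> col_entries X c = map (\<lambda>row. row ! (c - 1)) (filter (\<lambda>row. c \<le> length row) X)"
proof (induction X rule: rev_induct)
  case Nil thus ?case by (simp add: col_entries_def)
next
  case (snoc row X) thus ?case by (simp add: col_entries_snoc)
qed

lemma col_entries_0: "col_entries X 0 = []"
  by (simp add: col_entries_alt in_diag_def)

lemma col_entries_filter_ne:
  "col_entries (filter (\<lambda>row. row \<noteq> []) X) c = col_entries X c"
proof (cases "1 \<le> c")
  case True
  have "filter (\<lambda>row. c \<le> length row) (filter (\<lambda>row. row \<noteq> []) X) = filter (\<lambda>row. c \<le> length row) X"
    using True by (simp add: filter_filter) (rule filter_cong, auto)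
  thus ?thesis using True by (simp add: col_entries_rows)
next
  case False hence "c = 0" by simp
  thus ?thesis by (simp add: col_entries_0)
qed

lemma col_sorted_filter_ne: "col_sorted (filter (\<lambda>row. row \<noteq> []) X) c = col_sorted X c"
  by (simp add: col_sorted_def col_entries_filter_ne)

lemma col_len_rows: "1 \<le> c \<Longrightarrow> col_len X c = card {r. in_diag X r c}"
  using length_col_entries[of X c] col_entries_rows[of c X] by (simp add: col_len_def)

lemma filter_all_ne: "(\<And>k. k < length X \<Longrightarrow> X ! k \<noteq> []) \<Longrightarrow> filter (\<lambda>row. row \<noteq> []) X = X"
  by (rule filter_True) (auto simp: in_set_conv_nth)

lemma filter_one_empty:
  assumes "1 \<le> e" "e \<le> length X" "X ! (e - 1) = []" "\<And>k. k < length X \<Longrightarrow> k \<noteq> e - 1 \<Longrightarrow> X ! k \<noteq> []"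
  shows "filter (\<lambda>row. row \<noteq> []) X = take (e - 1) X @ drop e X"
proof -
  have X0: "X = take (e - 1) X @ X ! (e - 1) # drop (Suc (e - 1)) X"
    using assms(1,2) by (intro id_take_nth_drop) simp
  have X: "X = take (e - 1) X @ [X ! (e - 1)] @ drop e X"
    using X0 assms(1) by simp
  have t: "\<forall>row\<in>set (take (e - 1) X). row \<noteq> []"
  proof
    fix row assume "row \<in> set (take (e - 1) X)"
    then obtain k where "k < e - 1" "k < length X" "row = X ! k" by (auto simp: in_set_conv_nth)
    thus "row \<noteq> []" using assms(4)[of k] by simp
  qed
  have d: "\<forall>row\<in>set (drop e X). row \<noteq> []"
  proof
    fix row assume "row \<in> set (drop e X)"
    then obtain k where k: "k < length (drop e X)" "drop e X ! k = row" unfolding in_set_conv_nth by blast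
    hence "e + k < length X" "row = X ! (e + k)" by auto
    thus "row \<noteq> []" using assms(1) assms(4)[of "e + k"] by simp
  qed
  have "filter (\<lambda>row. row \<noteq> []) X = filter (\<lambda>row. row \<noteq> []) (take (e - 1) X @ [X ! (e - 1)] @ drop e X)"
    using X by simp
  also have "\<dots> = take (e - 1) X @ drop e X" using t d assms(3) by simp
  finally show ?thesis .
qed

lemma del_row:
  assumes "1 \<le> e" "e \<le> length X" "1 \<le> r"
  defines "Y \<equiv> take (e - 1) X @ drop e X"
  shows "length Y = length X - 1"
    and "in_diag Y r c = in_diag X (if r < e then r else Suc r) c"
    and "ent Y r c = ent X (if r < e then r else Suc r) c"
proof -
  show l: "length Y = length X - 1" using assms by (simp add: Y_def)
  have nth: "k < length Y \<Longrightarrow> Y ! k = X ! (if k < e - 1 then k else Suc k)" for k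
    using assms by (auto simp: Y_def nth_append min_def)
  show d: "in_diag Y r c = in_diag X (if r < e then r else Suc r) c"
    using assms l nth[of "r - 1"] by (auto simp: in_diag_def)
  show "ent Y r c = ent X (if r < e then r else Suc r) c"
    using assms l nth[of "r - 1"] d by (auto simp: ent_def in_diag_def)
qed

lemma is_SSRCT_I:
  assumes "\<And>r. 1 \<le> r \<Longrightarrow> r \<le> length X \<Longrightarrow> in_diag X r 1"
    and "\<And>r c. in_diag X r c \<Longrightarrow> 0 < ent X r c"
    and "\<And>r c. 1 \<le> c \<Longrightarrow> in_diag X r (Suc c) \<Longrightarrow> ent X r (Suc c) \<le> ent X r c"
    and "\<And>r. 1 \<le> r \<Longrightarrow> r < length X \<Longrightarrow> ent X r 1 < ent X (Suc r) 1"
    and "\<And>r s c. 1 \<le> c \<Longrightarrow> r < s \<Longrightarrow> in_diag X s (Suc c) \<Longrightarrow> in_diag X r c \<Longrightarrow>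
        ent X s (Suc c) \<le> ent X r c \<Longrightarrow> in_diag X r (Suc c) \<and> ent X s (Suc c) < ent X r (Suc c)"
  shows "is_SSRCT X"
proof -
  have 1: "\<forall>row\<in>set X. row \<noteq> []"
  proof
    fix row assume "row \<in> set X"
    then obtain k where k: "k < length X" "row = X ! k" by (auto simp: in_set_conv_nth)
    hence "in_diag X (Suc k) 1" using assms(1)[of "Suc k"] by simp
    thus "row \<noteq> []" using k by (auto simp: in_diag_def)
  qed
  have 2: "\<forall>row\<in>set X. \<forall>x\<in>set row. 0 < x"
  proof (intro ballI)
    fix row y assume "row \<in> set X" "y \<in> set row"
    then obtain k j where k: "k < length X" "row = X ! k" "j < length row" "y = row ! j" by (auto simp: in_set_conv_nth)
    hence "in_diag X (Suc k) (Suc j)" by (simp add: in_diag_def)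
    thus "0 < y" using assms(2)[of "Suc k" "Suc j"] k by (simp add: ent_def)
  qed
  have 3: "\<forall>r c. 1 \<le> c \<and> in_diag X r (c + 1) \<longrightarrow> ent X r (c + 1) \<le> ent X r c"
    using assms(3) by simp
  have 4: "\<forall>r. 1 \<le> r \<and> r < length X \<longrightarrow> ent X r 1 < ent X (r + 1) 1"
    using assms(4) by simp
  have 5: "\<forall>r s c. 1 \<le> c \<and> r < s \<and> in_diag X s (c + 1) \<and> in_diag X r c \<and>
        ent X s (c + 1) \<le> ent X r c \<longrightarrow>
        in_diag X r (c + 1) \<and> ent X s (c + 1) < ent X r (c + 1)"
  proof (intro allI impI)
    fix r s c assume h: "1 \<le> c \<and> r < s \<and> in_diag X s (c + 1) \<and> in_diag X r c \<and> ent X s (c + 1) \<le> ent X r c"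
    show "in_diag X r (c + 1) \<and> ent X s (c + 1) < ent X r (c + 1)" using assms(5)[of c r s] h by simp
  qed
  show ?thesis by (simp only: is_SSRCT_def) (intro conjI 1 2 3 4 5)
qed

lemma nth_remove1:
  assumes "distinct ys" "j < length ys" "q < length ys - 1"
  shows "remove1 (ys ! j) ys ! q = (if q < j then ys ! q else ys ! Suc q)"
proof -
  have ys: "ys = take j ys @ [ys ! j] @ drop (Suc j) ys" using assms(2) by (simp add: id_take_nth_drop)
  have nin: "ys ! j \<notin> set (take j ys)"
  proof
    assume "ys ! j \<in> set (take j ys)"
    then obtain k where "k < j" "ys ! k = ys ! j" using assms(2) by (auto simp: in_set_conv_nth)
    thus False using assms(1,2) nth_eq_iff_index_eq by fastforce
  qed
  have "remove1 (ys ! j) ys = take j ys @ drop (Suc j) ys"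
    by (subst ys) (simp add: remove1_append nin)
  thus ?thesis using assms by (auto simp: nth_append min_def)
qed

lemma sorted_gt_unique:
  assumes "sorted_wrt (>) (xs::nat list)" "sorted_wrt (>) ys" "mset xs = mset ys"
  shows "xs = ys"
proof -
  have sx: "sorted (rev xs)" unfolding sorted_wrt_rev by (rule sorted_wrt_mono_rel[OF _ assms(1)]) simp
  have sy: "sorted (rev ys)" unfolding sorted_wrt_rev by (rule sorted_wrt_mono_rel[OF _ assms(2)]) simp
  have "sort (rev ys) = rev xs" by (rule properties_for_sort) (use assms(3) sx in simp_all)
  moreover have "sort (rev ys) = rev ys" using sy by (simp add: sorted_sort_id)
  ultimately show ?thesis by simp
qed

lemma col_sorted_gt: "distinct (col_entries X c) \<Longrightarrow> sorted_wrt (>) (col_sorted X c)"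
  by (simp add: col_sorted_def sorted_wrt_rev strict_sorted_iff)

lemma map_of_zip_nth_le:
  "distinct xs \<Longrightarrow> j < length xs \<Longrightarrow> length xs \<le> length ys \<Longrightarrow> map_of (zip xs ys) (xs ! j) = Some (ys ! j)"
proof (induction xs arbitrary: ys j)
  case Nil thus ?case by simp
next
  case (Cons u xs)
  then obtain w ys' where ys: "ys = w # ys'" by (cases ys) auto
  show ?case
  proof (cases j)
    case 0 thus ?thesis using ys by simp
  next
    case (Suc j')
    have "(u # xs) ! j \<noteq> u" using Cons.prems Suc by (auto simp: nth_Cons)
    thus ?thesis using Cons ys Suc by auto
  qed
qed

lemma map_of_zip_None: "r \<notin> set xs \<Longrightarrow> map_of (zip xs ys) r = None"
  by (auto simp: map_of_eq_None_iff dest: set_zip_leftD)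


lemma sort_mset_eq: "mset xs = mset ys \<Longrightarrow> sort xs = sort (ys :: nat list)"
  by (rule properties_for_sort) simp_all

context stp begin

definition "sv r = (case map_of (zip (tl ch) ch) r of Some q \<Rightarrow> a q | None \<Rightarrow> a r)"

definition "rowf p = (let row = \<tau> ! (p - 1) in
                 if p = r1 then take (i - 1) row
                 else (case map_of (zip (tl ch) ch) p of
                         Some q \<Rightarrow> row[i - 1 := ent \<tau> q i]
                       | None \<Rightarrow> row))"

definition "\<sigma>0 = map rowf [1..<n + 1]"

lemma phi_eq: "phi (Suc i) \<tau> = filter (\<lambda>row. row \<noteq> []) \<sigma>0"
  unfolding phi_def \<sigma>0_def rowf_def r1_def ch_def n_def Let_def diff_Suc_1 by (rule refl)

lemma tl_ch_nth: "j < length (tl ch) \<Longrightarrow> tl ch ! j = ch ! Suc j"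
  by (simp add: nth_tl)

lemma in_tl_ch: "r \<in> set (tl ch) \<longleftrightarrow> (\<exists>j. Suc j < length ch \<and> r = ch ! Suc j)"
proof
  assume "r \<in> set (tl ch)"
  then obtain j where "j < length (tl ch)" "tl ch ! j = r" unfolding in_set_conv_nth by blast
  hence "Suc j < length ch \<and> r = ch ! Suc j" by (auto simp: nth_tl)
  thus "\<exists>j. Suc j < length ch \<and> r = ch ! Suc j" by blast
next
  assume "\<exists>j. Suc j < length ch \<and> r = ch ! Suc j"
  then obtain j where "Suc j < length ch" "r = ch ! Suc j" by blast
  hence "j < length (tl ch)" "tl ch ! j = r" by (auto simp: nth_tl)
  thus "r \<in> set (tl ch)" by (metis nth_mem)
qed

lemma mo_some: "Suc j < length ch \<Longrightarrow> map_of (zip (tl ch) ch) (ch ! Suc j) = Some (ch ! j)"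
  using map_of_zip_nth_le[of "tl ch" j ch] ch_distinct by (simp add: distinct_tl nth_tl)

lemma sv_some: "Suc j < length ch \<Longrightarrow> sv (ch ! Suc j) = a (ch ! j)"
  by (simp add: sv_def mo_some)

lemma sv_none: "r \<notin> set (tl ch) \<Longrightarrow> sv r = a r"
  by (simp add: sv_def map_of_zip_None)

lemma ch_cons: "ch = r1 # tl ch"
  using ch_ne ch0 by (cases ch) auto

lemma r1_notin_tl: "r1 \<notin> set (tl ch)"
  using ch_distinct ch_cons by (metis distinct.simps(2))

lemma tl_lt_r1: "r \<in> set (tl ch) \<Longrightarrow> r < r1 \<and> D r"
  using ch_lt[of 0] ch_D ch0 by (auto simp: in_tl_ch)

lemma sv_le: "sv r \<le> a r"
proof (cases "r \<in> set (tl ch)")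
  case True
  then obtain j where "Suc j < length ch" "r = ch ! Suc j" by (auto simp: in_tl_ch)
  thus ?thesis using sv_some ch_a_step[of j] by simp
next
  case False thus ?thesis by (simp add: sv_none)
qed

lemma b_le_sv: "r \<noteq> r1 \<Longrightarrow> b r \<le> sv r"
proof (cases "r \<in> set (tl ch)")
  case True
  then obtain j where j: "Suc j < length ch" "r = ch ! Suc j" by (auto simp: in_tl_ch)
  thus ?thesis using sv_some ch_step[of j] by (simp add: cover_def)
next
  case False thus ?thesis by (simp add: sv_none b_le_a)
qed

lemma sv_pos: "D r \<Longrightarrow> 0 < sv r"
proof (cases "r \<in> set (tl ch)")
  case True
  then obtain j where j: "Suc j < length ch" "r = ch ! Suc j" by (auto simp: in_tl_ch)
  hence "D (ch ! j)" using ch_D[of j] by simp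
  thus ?thesis using j sv_some ent_pos by (simp add: D_def a_def)
next
  case False
  assume "D r" thus ?thesis using False sv_none ent_pos by (simp add: D_def a_def)
qed

lemma len_r1: "length (\<tau> ! (r1 - 1)) = i" using r1_in by simp

lemma rowf_r1: "rowf r1 = take (i - 1) (\<tau> ! (r1 - 1))"
  by (simp add: rowf_def)

lemma rowf_other: "p \<noteq> r1 \<Longrightarrow> rowf p = (if p \<in> set (tl ch) then (\<tau> ! (p - 1))[i - 1 := sv p] else \<tau> ! (p - 1))"
proof (cases "p \<in> set (tl ch)")
  case True
  then obtain j where j: "Suc j < length ch" "p = ch ! Suc j" by (auto simp: in_tl_ch)
  assume "p \<noteq> r1"
  thus ?thesis using True j mo_some[of j] sv_some[of j] by (simp add: rowf_def a_def)
next
  case False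
  assume "p \<noteq> r1"
  thus ?thesis using False by (simp add: rowf_def map_of_zip_None)
qed

lemma len_rowf: "length (rowf p) = (if p = r1 then i - 1 else length (\<tau> ! (p - 1)))"
  using rowf_r1 rowf_other[of p] len_r1 by auto

lemma s0_len: "length \<sigma>0 = n" by (simp add: \<sigma>0_def)

lemma s0_nth: "1 \<le> p \<Longrightarrow> p \<le> n \<Longrightarrow> \<sigma>0 ! (p - 1) = rowf p"
  by (simp add: \<sigma>0_def nth_upt)

lemma s0_in_diag: "in_diag \<sigma>0 r c \<longleftrightarrow> in_diag \<tau> r c \<and> \<not> (r = r1 \<and> c = i)"
proof (cases "1 \<le> r \<and> r \<le> n")
  case False thus ?thesis by (auto simp: in_diag_def s0_len n_def)
next
  case True
  thus ?thesis using len_rowf[of r] s0_nth[of r] len_r1 by (auto simp: in_diag_def s0_len n_def)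
qed

lemma s0_ent: "ent \<sigma>0 r c = (if in_diag \<sigma>0 r c then (if c = i then sv r else ent \<tau> r c) else 0)"
proof (cases "in_diag \<sigma>0 r c")
  case False thus ?thesis by simp
next
  case True
  hence T: "in_diag \<tau> r c" "\<not> (r = r1 \<and> c = i)" using s0_in_diag by auto
  hence b: "1 \<le> r" "r \<le> n" "1 \<le> c" "c \<le> length (\<tau> ! (r - 1))" by (auto simp: in_diag_def n_def)
  have "ent \<sigma>0 r c = rowf r ! (c - 1)" using True b s0_nth by (simp add: ent_def)
  also have "\<dots> = (if c = i then sv r else ent \<tau> r c)"
  proof (cases "r = r1")
    case True
    hence "c < i" using T b len_r1 by simp
    thus ?thesis using True rowf_r1 T b by (simp add: ent_def nth_take)
  next
    case False
    show ?thesis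
    proof (cases "r \<in> set (tl ch)")
      case True
      hence rw: "rowf r = (\<tau> ! (r - 1))[i - 1 := sv r]" using False rowf_other[of r] by simp
      show ?thesis
      proof (cases "c = i")
        case True thus ?thesis using rw b by simp
      next
        case ne: False
        hence "c - 1 \<noteq> i - 1" using b i1 by arith
        thus ?thesis using rw ne T by (simp add: ent_def)
      qed
    next
      case nt: False
      thus ?thesis using False rowf_other[of r] T b sv_none[of r] by (auto simp: ent_def a_def)
    qed
  qed
  finally show ?thesis using True by simp
qed

lemma in_diag_1: "1 \<le> r \<Longrightarrow> r \<le> n \<Longrightarrow> in_diag \<tau> r 1"
  using rows_ne[of "\<tau> ! (r - 1)"] by (auto simp: in_diag_def n_def Suc_le_eq)

end


context stp begin

lemma s0_in_diag_ne: "c \<noteq> i \<Longrightarrow> in_diag \<sigma>0 r c = in_diag \<tau> r c"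
  by (simp add: s0_in_diag)

lemma s0_ent_ne: "c \<noteq> i \<Longrightarrow> ent \<sigma>0 r c = ent \<tau> r c"
  by (simp add: s0_ent s0_in_diag)

lemma s0_ent_i: "ent \<sigma>0 r i = (if D r \<and> r \<noteq> r1 then sv r else 0)"
  by (simp add: s0_ent s0_in_diag D_def)

lemma s0_in_diag_i: "in_diag \<sigma>0 r i = (D r \<and> r \<noteq> r1)"
  by (simp add: s0_in_diag D_def)

lemma triple_a:
  assumes c: "Suc c = i" and rs: "r < s" and ds: "D s" "s \<noteq> r1" and dr: "in_diag \<tau> r c"
    and le: "sv s \<le> ent \<tau> r c"
  shows "D r \<and> r \<noteq> r1 \<and> sv s < sv r"
proof -
  have c1: "1 \<le> c" using dr by (simp add: in_diag_def)
  show ?thesis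
  proof (cases "s \<in> set (tl ch)")
    case True
    then obtain j where j: "Suc j < length ch" "s = ch ! Suc j" by (auto simp: in_tl_ch)
    have svs: "sv s = a (ch ! j)" using j sv_some by simp
    have sj: "s < ch ! j" using ch_lt[of j "Suc j"] j by simp
    have Dj: "D (ch ! j)" using ch_D[of j] j by simp
    have "in_diag \<tau> r (Suc c) \<and> ent \<tau> (ch ! j) (Suc c) < ent \<tau> r (Suc c)"
      using triple[of c r "ch ! j"] c1 rs sj Dj dr le svs c by (simp add: D_def a_def)
    hence Dr: "D r" and ar: "a (ch ! j) < a r" using c by (simp_all add: D_def a_def)
    have rr1: "r \<noteq> r1" using rs tl_lt_r1 True by fastforce
    have "a (ch ! j) < sv r"
    proof (cases "r \<in> set (tl ch)")
      case False thus ?thesis using ar sv_none by simp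
    next
      case True
      then obtain m where m: "Suc m < length ch" "r = ch ! Suc m" by (auto simp: in_tl_ch)
      have "j < m"
      proof (rule ccontr)
        assume "\<not> j < m"
        hence "Suc m \<le> Suc j" by simp
        hence "ch ! Suc j \<le> ch ! Suc m" using ch_lt[of "Suc m" "Suc j"] j by (cases "Suc m = Suc j") auto
        thus False using rs m j by simp
      qed
      thus ?thesis using m sv_some ch_a_lt[of j m] by simp
    qed
    thus ?thesis using Dr rr1 svs by simp
  next
    case False
    have svs: "sv s = a s" using False sv_none by simp
    have "in_diag \<tau> r (Suc c) \<and> ent \<tau> s (Suc c) < ent \<tau> r (Suc c)"
      using triple[of c r s] c1 rs ds dr le svs c by (simp add: D_def a_def)
    hence Dr: "D r" and asr: "a s < a r" using c by (simp_all add: D_def a_def)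
    have rr1: "r \<noteq> r1"
    proof
      assume rr: "r = r1"
      have "D' s" using below_r1[of s] rs rr ds by simp
      moreover have "b s \<le> a r1" using b_le_a[of s] asr rr by simp
      ultimately have "D' r1" using triple[of i r1 s] i1 rs rr D_r1 by (simp add: D_def D'_def a_def b_def)
      thus False using not_D'_r1 by simp
    qed
    have "a s < sv r"
    proof (cases "r \<in> set (tl ch)")
      case False thus ?thesis using asr sv_none by simp
    next
      case True
      then obtain j where j: "Suc j < length ch" "r = ch ! Suc j" by (auto simp: in_tl_ch)
      have svr: "sv r = a (ch ! j)" using j sv_some by simp
      show ?thesis
      proof (rule ccontr)
        assume "\<not> a s < sv r"
        hence ge: "a (ch ! j) \<le> a s" using svr by simp
        have sne: "s \<noteq> ch ! j"
        proof (cases j)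
          case 0 thus ?thesis using ds ch0 by simp
        next
          case (Suc j')
          have "ch ! j \<in> set (tl ch)" unfolding in_tl_ch using j Suc by (intro exI[of _ j']) simp
          thus ?thesis using False by auto
        qed
        have Dj: "D (ch ! j)" using ch_D[of j] j by simp
        have "a (ch ! j) \<noteq> a s"
        proof (cases "s < ch ! j")
          case True thus ?thesis using col_distinct[of s i "ch ! j"] ds Dj by (simp add: D_def a_def)
        next
          case False thus ?thesis using col_distinct[of "ch ! j" i s] ds Dj sne by (simp add: D_def a_def)
        qed
        hence lt: "a (ch ! j) < a s" using ge by simp
        have cvr: "cover (a (ch ! j)) r" using ch_step[of j] j by simp
        have "b s \<le> a (ch ! j)"
        proof (cases "D' s")
          case False thus ?thesis by (simp add: b_def D'_def)
        next
          case True
          have "b s \<le> a r" using b_le_a[of s] asr by simp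
          hence "b s < b r" using triple[of i r s] i1 rs True Dr by (simp add: D_def D'_def a_def b_def)
          thus ?thesis using cvr by (simp add: cover_def)
        qed
        hence cvs: "cover (a (ch ! j)) s" using lt by (simp add: cover_def)
        show False
        proof (cases "s < ch ! j")
          case True thus False using ch_step[of j] j rs cvs by auto
        next
          case False thus False using NC[of j s] j sne cvs by simp
        qed
      qed
    qed
    thus ?thesis using Dr rr1 svs by simp
  qed
qed

lemma ssrct_ge2:
  assumes i2: "2 \<le> i"
  shows "is_SSRCT \<sigma>0"
proof (rule is_SSRCT_I)
  fix r assume "1 \<le> r" "r \<le> length \<sigma>0"
  thus "in_diag \<sigma>0 r 1" using in_diag_1[of r] i2 s0_in_diag_ne[of 1 r] by (simp add: s0_len)
next
  fix r c assume d: "in_diag \<sigma>0 r c"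
  show "0 < ent \<sigma>0 r c"
  proof (cases "c = i")
    case True thus ?thesis using d sv_pos s0_ent_i s0_in_diag_i by auto
  next
    case False thus ?thesis using d s0_ent_ne s0_in_diag_ne ent_pos by simp
  qed
next
  fix r c assume c1: "1 \<le> c" and d: "in_diag \<sigma>0 r (Suc c)"
  show "ent \<sigma>0 r (Suc c) \<le> ent \<sigma>0 r c"
  proof (cases "Suc c = i")
    case True
    hence "D r" "r \<noteq> r1" using d s0_in_diag_i by auto
    moreover have "in_diag \<tau> r (Suc c)" using True \<open>D r\<close> by (simp add: D_def)
    ultimately show ?thesis using True s0_ent_i s0_ent_ne[of c r] sv_le[of r] row_dec[of r c] c1
      by (simp add: a_def)
  next
    case F: False
    show ?thesis
    proof (cases "c = i")
      case True
      hence dd: "D' r" using d s0_in_diag_ne[of "Suc c" r] by (simp add: D'_def)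
      hence "r \<noteq> r1" using not_D'_r1 by auto
      thus ?thesis using True dd D'_D s0_ent_i s0_ent_ne[of "Suc i" r] b_le_sv[of r] by (simp add: b_def)
    next
      case False
      thus ?thesis using F d s0_ent_ne s0_in_diag_ne row_dec[of r c] c1 by simp
    qed
  qed
next
  fix r assume "1 \<le> r" "r < length \<sigma>0"
  thus "ent \<sigma>0 r 1 < ent \<sigma>0 (Suc r) 1" using col1_step[of r] i2 s0_ent_ne[of 1] by (simp add: s0_len n_def)
next
  fix r s c assume c1: "1 \<le> c" and rs: "r < s" and ds: "in_diag \<sigma>0 s (Suc c)" and dr: "in_diag \<sigma>0 r c"
    and le: "ent \<sigma>0 s (Suc c) \<le> ent \<sigma>0 r c"
  show "in_diag \<sigma>0 r (Suc c) \<and> ent \<sigma>0 s (Suc c) < ent \<sigma>0 r (Suc c)"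
  proof (cases "Suc c = i")
    case True
    have ci: "c \<noteq> i" using True by simp
    have "D s" "s \<noteq> r1" using ds True s0_in_diag_i by auto
    moreover have "in_diag \<tau> r c" using dr s0_in_diag_ne[OF ci] by simp
    moreover have "sv s \<le> ent \<tau> r c" using le True s0_ent_i s0_ent_ne[OF ci] \<open>D s\<close> \<open>s \<noteq> r1\<close> by simp
    ultimately have "D r \<and> r \<noteq> r1 \<and> sv s < sv r" using triple_a[OF True rs] by blast
    thus ?thesis using True s0_ent_i s0_in_diag_i \<open>D s\<close> \<open>s \<noteq> r1\<close> by simp
  next
    case F: False
    show ?thesis
    proof (cases "c = i")
      case True
      have Ds: "D' s" using ds True s0_in_diag_ne[of "Suc c" s] by (simp add: D'_def)
      have Dr: "D r" "r \<noteq> r1" using dr True s0_in_diag_i by auto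
      have "b s \<le> sv r" using le True s0_ent_ne[of "Suc i" s] s0_ent_i Dr by (simp add: b_def)
      hence "b s \<le> a r" using sv_le[of r] by simp
      hence "D' r \<and> b s < b r" using triple[of i r s] i1 rs Ds Dr by (simp add: D_def D'_def a_def b_def)
      thus ?thesis using True s0_in_diag_ne[of "Suc i"] s0_ent_ne[of "Suc i"] by (simp add: D'_def b_def)
    next
      case False
      thus ?thesis using F triple[of c r s] c1 rs ds dr le s0_in_diag_ne s0_ent_ne by simp
    qed
  qed
qed

lemma s0_rows_ne_ge2: "2 \<le> i \<Longrightarrow> k < length \<sigma>0 \<Longrightarrow> \<sigma>0 ! k \<noteq> []"
proof -
  assume i2: "2 \<le> i" and k: "k < length \<sigma>0"
  have "in_diag \<sigma>0 (Suc k) 1" using in_diag_1[of "Suc k"] k i2 s0_in_diag_ne[of 1 "Suc k"] by (simp add: s0_len)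
  thus ?thesis by (auto simp: in_diag_def)
qed

lemma phi_ge2: "2 \<le> i \<Longrightarrow> phi (Suc i) \<tau> = \<sigma>0"
proof -
  assume i2: "2 \<le> i"
  have "filter (\<lambda>row. row \<noteq> []) \<sigma>0 = \<sigma>0" by (rule filter_all_ne) (rule s0_rows_ne_ge2[OF i2])
  thus ?thesis using phi_eq by simp
qed

end


context stp begin

lemma ch_len1: "i = 1 \<Longrightarrow> length ch = 1"
proof (rule ccontr)
  assume i: "i = 1" and ne: "length ch \<noteq> 1"
  hence l: "Suc 0 < length ch" using ch_ne by (cases ch) auto
  have st: "cover (a (ch ! 0)) (ch ! Suc 0) \<and> 1 \<le> ch ! Suc 0 \<and> ch ! Suc 0 < ch ! 0" using ch_step[of 0] l by simp
  hence "ent \<tau> r1 i < ent \<tau> (ch ! Suc 0) i" using ch0 by (simp add: cover_def a_def)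
  hence "ent \<tau> r1 1 < ent \<tau> (ch ! Suc 0) 1" unfolding i .
  moreover have "ent \<tau> (ch ! Suc 0) 1 < ent \<tau> r1 1" using col1_mono[of "ch ! Suc 0" r1] st ch0 r1_in by (simp add: n_def)
  ultimately show False by simp
qed

lemma tl_ch_nil: "i = 1 \<Longrightarrow> tl ch = []"
  using ch_len1 by (cases ch) auto

definition "g r = (if r < r1 then r else Suc r)"

lemma g_mono: "r < s \<Longrightarrow> g r < g s"
  by (simp add: g_def)

lemma g_ne: "g r \<noteq> r1" by (simp add: g_def)

definition "\<sigma>1 = take (r1 - 1) \<sigma>0 @ drop r1 \<sigma>0"

lemma phi_1: assumes i: "i = 1" shows "phi (Suc i) \<tau> = \<sigma>1"
proof -
  have "filter (\<lambda>row. row \<noteq> []) \<sigma>0 = take (r1 - 1) \<sigma>0 @ drop r1 \<sigma>0"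
  proof (rule filter_one_empty)
    show "1 \<le> r1" "r1 \<le> length \<sigma>0" using r1_in by (auto simp: s0_len)
    show "\<sigma>0 ! (r1 - 1) = []" using r1_in s0_nth[of r1] rowf_r1 i by simp
    fix k assume k: "k < length \<sigma>0" "k \<noteq> r1 - 1"
    hence "Suc k \<noteq> r1" by auto
    hence "\<sigma>0 ! k = \<tau> ! k" using s0_nth[of "Suc k"] k rowf_other[of "Suc k"] tl_ch_nil[OF i] by (simp add: s0_len)
    thus "\<sigma>0 ! k \<noteq> []" using rows_ne[of "\<tau> ! k"] k by (simp add: s0_len n_def)
  qed
  thus ?thesis using phi_eq \<sigma>1_def by simp
qed

lemma s1_len: "length \<sigma>1 = n - 1"
  using r1_in by (auto simp: \<sigma>1_def s0_len min_def)

lemma s1_in_diag: "1 \<le> r \<Longrightarrow> in_diag \<sigma>1 r c = in_diag \<tau> (g r) c"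
  using del_row(2)[of r1 \<sigma>0 r c] r1_in s0_in_diag[of "g r" c] g_ne[of r]
  by (simp add: \<sigma>1_def s0_len g_def)

lemma s1_ent: "i = 1 \<Longrightarrow> 1 \<le> r \<Longrightarrow> ent \<sigma>1 r c = ent \<tau> (g r) c"
proof -
  assume i: "i = 1" and r: "1 \<le> r"
  have "ent \<sigma>1 r c = ent \<sigma>0 (g r) c" using del_row(3)[of r1 \<sigma>0 r c] r1_in r by (simp add: \<sigma>1_def s0_len g_def)
  also have "\<dots> = ent \<tau> (g r) c"
    using s0_ent[of "g r" c] s0_in_diag[of "g r" c] g_ne[of r] sv_none[of "g r"] tl_ch_nil[OF i]
    by (simp add: a_def)
  finally show ?thesis .
qed

lemma g_le: "r \<le> n - 1 \<Longrightarrow> g r \<le> n"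
  using r1_in by (auto simp: g_def)

lemma ssrct_1: assumes i: "i = 1" shows "is_SSRCT \<sigma>1"
proof (rule is_SSRCT_I)
  fix r assume "1 \<le> r" "r \<le> length \<sigma>1"
  thus "in_diag \<sigma>1 r 1" using s1_in_diag in_diag_1[of "g r"] g_le[of r] s1_len
    by (simp add: g_def split: if_splits)
next
  fix r c assume d: "in_diag \<sigma>1 r c"
  hence "1 \<le> r" by (simp add: in_diag_def)
  thus "0 < ent \<sigma>1 r c" using d s1_in_diag s1_ent[OF i] ent_pos by simp
next
  fix r c assume "1 \<le> c" "in_diag \<sigma>1 r (Suc c)"
  moreover hence "1 \<le> r" by (simp add: in_diag_def)
  ultimately show "ent \<sigma>1 r (Suc c) \<le> ent \<sigma>1 r c" using s1_in_diag s1_ent[OF i] row_dec by simp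
next
  fix r assume r: "1 \<le> r" "r < length \<sigma>1"
  have "g r < g (Suc r)" by (rule g_mono) simp
  moreover have "g (Suc r) \<le> n" using g_le[of "Suc r"] r s1_len by simp
  moreover have "1 \<le> g r" using r by (simp add: g_def)
  ultimately show "ent \<sigma>1 r 1 < ent \<sigma>1 (Suc r) 1" using s1_ent[OF i] r col1_mono[of "g r" "g (Suc r)"] by (simp add: n_def)
next
  fix r s c assume c1: "1 \<le> c" and rs: "r < s" and ds: "in_diag \<sigma>1 s (Suc c)" and dr: "in_diag \<sigma>1 r c"
    and le: "ent \<sigma>1 s (Suc c) \<le> ent \<sigma>1 r c"
  have r1: "1 \<le> r" "1 \<le> s" using dr ds by (auto simp: in_diag_def)
  show "in_diag \<sigma>1 r (Suc c) \<and> ent \<sigma>1 s (Suc c) < ent \<sigma>1 r (Suc c)"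
    using triple[of c "g r" "g s"] g_mono[OF rs] c1 ds dr le s1_in_diag s1_ent[OF i] r1 by simp
qed

lemma ssrct_phi: "is_SSRCT (phi (Suc i) \<tau>)"
proof (cases "i = 1")
  case True thus ?thesis using phi_1 ssrct_1 by simp
next
  case False thus ?thesis using phi_ge2 ssrct_ge2 i1 by simp
qed

lemma len_phi: "length (phi (Suc i) \<tau>) = (if i = 1 then n - 1 else n)"
  using phi_1 phi_ge2 s1_len s0_len i1 by auto

lemma mset_s0_ne: "c \<noteq> i \<Longrightarrow> mset (col_entries \<sigma>0 c) = mset (col_entries \<tau> c)"
proof -
  assume c: "c \<noteq> i"
  have "{r. in_diag \<sigma>0 r c} = {r. in_diag \<tau> r c}" using s0_in_diag_ne[OF c] by simp
  thus ?thesis unfolding mset_col_entries using s0_ent_ne[OF c] by simp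
qed

lemma finD: "finite {r. D r}" by (simp add: D_def finite_in_diag)

lemma mset_s0_i: "mset (col_entries \<sigma>0 i) = mset (col_entries \<tau> i) - {#x#}"
proof -
  define SD where "SD = {r. D r}"
  define C where "C = set ch"
  define T' where "T' = set (tl ch)"
  have finSD: "finite SD" using finD SD_def by simp
  have CSD: "C \<subseteq> SD" unfolding C_def SD_def using ch_D by (auto simp: in_set_conv_nth)
  have CT: "C = insert r1 T'" unfolding C_def T'_def by (subst ch_cons) simp
  have r1T: "r1 \<notin> T'" using r1_notin_tl T'_def by simp
  have set_s: "{r. in_diag \<sigma>0 r i} = (SD - C) \<union> T'" using s0_in_diag_i CT CSD SD_def r1T by auto
  have ms: "mset_set ((SD - C) \<union> T') = mset_set (SD - C) + mset_set T'"
    by (rule mset_set_Union) (use finSD CT T'_def in auto)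
  have mT: "mset_set T' = mset (tl ch)" unfolding T'_def by (rule mset_set_set) (simp add: ch_distinct distinct_tl)
  have "mset (col_entries \<sigma>0 i) = image_mset (\<lambda>r. ent \<sigma>0 r i) (mset_set ((SD - C) \<union> T'))"
    unfolding mset_col_entries set_s ..
  also have "\<dots> = image_mset sv (mset_set (SD - C)) + image_mset sv (mset (tl ch))"
  proof -
    have "image_mset (\<lambda>r. ent \<sigma>0 r i) (mset_set ((SD - C) \<union> T')) = image_mset sv (mset_set ((SD - C) \<union> T'))"
    proof (rule image_mset_cong)
      fix r assume "r \<in># mset_set ((SD - C) \<union> T')"
      hence "r \<in> (SD - C) \<union> T'" using finSD CT by (simp add: T'_def)
      thus "ent \<sigma>0 r i = sv r" using s0_ent_i set_s s0_in_diag_i by auto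
    qed
    thus ?thesis using ms mT by simp
  qed
  also have "image_mset sv (mset_set (SD - C)) = image_mset a (mset_set (SD - C))"
  proof (rule image_mset_cong)
    fix r assume "r \<in># mset_set (SD - C)"
    hence "r \<notin> T'" using finSD CT by auto
    thus "sv r = a r" using sv_none T'_def by simp
  qed
  also have "image_mset sv (mset (tl ch)) = mset (map a (butlast ch))"
  proof -
    have "map sv (tl ch) = map a (butlast ch)"
    proof (rule nth_equalityI)
      show "length (map sv (tl ch)) = length (map a (butlast ch))" by simp
      fix j assume "j < length (map sv (tl ch))"
      hence j: "Suc j < length ch" by simp
      thus "map sv (tl ch) ! j = map a (butlast ch) ! j" using sv_some[OF j] by (simp add: nth_tl nth_butlast)
    qed
    hence "mset (map sv (tl ch)) = mset (map a (butlast ch))" by simp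
    thus ?thesis by simp
  qed
  finally have E1: "mset (col_entries \<sigma>0 i) = image_mset a (mset_set (SD - C)) + mset (map a (butlast ch))" .
  have "mset (col_entries \<tau> i) = image_mset a (mset_set SD)"
    unfolding mset_col_entries SD_def D_def a_def ..
  also have "mset_set SD = mset_set (SD - C) + mset_set C"
  proof -
    have "SD = (SD - C) \<union> C" using CSD by auto
    hence "mset_set SD = mset_set ((SD - C) \<union> C)" by simp
    also have "\<dots> = mset_set (SD - C) + mset_set C" by (rule mset_set_Union) (use finSD CSD in \<open>auto intro: finite_subset\<close>)
    finally show ?thesis .
  qed
  also have "mset_set C = mset ch" unfolding C_def by (rule mset_set_set) (rule ch_distinct)
  finally have E2: "mset (col_entries \<tau> i) = image_mset a (mset_set (SD - C)) + mset (map a ch)" by simp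
  have "mset (map a ch) = mset (map a (butlast ch)) + {#x#}"
  proof -
    have "ch = butlast ch @ [last ch]" using ch_ne by simp
    hence "map a ch = map a (butlast ch) @ [a (last ch)]" by (metis map_append list.simps(8) list.simps(9))
    thus ?thesis by (simp add: x_def)
  qed
  thus ?thesis using E1 E2 by simp
qed

lemma cs_phi: "col_sorted (phi (Suc i) \<tau>) c = (if c = i then remove1 x (cs i) else cs c)"
proof -
  have cs0: "col_sorted (phi (Suc i) \<tau>) c = col_sorted \<sigma>0 c" using phi_eq col_sorted_filter_ne by simp
  show ?thesis
  proof (cases "c = i")
    case False
    have "sort (col_entries \<sigma>0 c) = sort (col_entries \<tau> c)" by (rule sort_mset_eq[OF mset_s0_ne[OF False]])
    thus ?thesis using cs0 False by (simp add: col_sorted_def)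
  next
    case True
    have dist: "distinct (cs i)" using cs_sorted[of i] by (metis distinct_col_entries col_sorted_def distinct_rev distinct_sort)
    have rm: "remove1 x (cs i) = filter (\<lambda>y. x \<noteq> y) (cs i)"
      using dist by (simp add: distinct_remove1_removeAll removeAll_filter_not_eq)
    have sg: "sorted_wrt (>) (remove1 x (cs i))" unfolding rm by (rule sorted_wrt_filter) (rule cs_sorted)
    have srt: "sorted (rev (remove1 x (cs i)))" unfolding sorted_wrt_rev by (rule sorted_wrt_mono_rel[OF _ sg]) simp
    have "sort (col_entries \<sigma>0 i) = rev (remove1 x (cs i))"
    proof (rule properties_for_sort)
      show "mset (rev (remove1 x (cs i))) = mset (col_entries \<sigma>0 i)"
        using mset_s0_i by (simp add: col_sorted_def)
      show "sorted (rev (remove1 x (cs i)))" by (rule srt)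
    qed
    thus ?thesis using cs0 True by (simp add: col_sorted_def)
  qed
qed

end


context stp begin

definition "Lq = map (\<lambda>p. let row = rho \<tau> ! (p - 1) in
                  if p < Suc p0 then row
                  else if p < length (cs i) then row[i - 1 := ent (rho \<tau>) (p + 1) i]
                  else if p = length (cs i) then take (i - 1) row
                  else row) [1..<n + 1]"

lemma col_len_T: "col_len (rho \<tau>) i = length (cs i)"
proof -
  have "{r. in_diag (rho \<tau>) r i} = {1..length (cs i)}" using i1 by (auto simp: T_in_diag)
  thus ?thesis using col_len_rows[of i "rho \<tau>"] i1 by simp
qed

lemma tjdt_eq: "tjdt (Suc i) (rho \<tau>) = filter (\<lambda>row. row \<noteq> []) Lq"
  unfolding tjdt_def Let_def diff_Suc_1 tjdt_row_eq col_len_T rho_len Lq_def n_def by (rule refl)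

lemma len_T_row: "1 \<le> p \<Longrightarrow> p \<le> n \<Longrightarrow> 1 \<le> c \<Longrightarrow> c \<le> length (rho \<tau> ! (p - 1)) \<longleftrightarrow> in_diag (rho \<tau>) p c"
  by (simp add: in_diag_def rho_len n_def)

context
  assumes add: "length (cs (Suc i)) < length (cs i)"
begin

lemma h_le_n: "length (cs i) \<le> n" by (rule len_cs_le_n)

lemma Lq_len: "length Lq = n" by (simp add: Lq_def)

lemma Lq_nth: "1 \<le> p \<Longrightarrow> p \<le> n \<Longrightarrow> Lq ! (p - 1) = (let row = rho \<tau> ! (p - 1) in
                  if p < Suc p0 then row
                  else if p < length (cs i) then row[i - 1 := ent (rho \<tau>) (p + 1) i]
                  else if p = length (cs i) then take (i - 1) row
                  else row)"
proof -
  assume p: "1 \<le> p" "p \<le> n"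
  have e: "[1..<n + 1] ! (p - 1) = p" using p by (subst nth_upt) auto
  have l: "p - 1 < length [1..<n + 1]" using p by simp
  show ?thesis unfolding Lq_def nth_map[OF l] e ..
qed

lemma Lq_in_diag: "in_diag Lq r c \<longleftrightarrow> in_diag (rho \<tau>) r c \<and> \<not> (r = length (cs i) \<and> c = i)"
proof (cases "1 \<le> r \<and> r \<le> n \<and> 1 \<le> c")
  case False thus ?thesis by (auto simp: in_diag_def Lq_len rho_len n_def)
next
  case True
  define row where "row = rho \<tau> ! (r - 1)"
  have rl: "c \<le> length row \<longleftrightarrow> in_diag (rho \<tau>) r c" using len_T_row[of r c] True row_def by simp
  have "length (Lq ! (r - 1)) = (if r = length (cs i) then i - 1 else length row)"
  proof -
    have "r = length (cs i) \<Longrightarrow> i \<le> length row"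
      using len_T_row[of r i] True i1 p0 by (simp add: T_in_diag row_def)
    thus ?thesis using Lq_nth[of r] True p0 unfolding row_def[symmetric] by (auto simp: Let_def)
  qed
  moreover have "r = length (cs i) \<Longrightarrow> \<not> in_diag (rho \<tau>) r (Suc i)"
    using add by (simp add: T_in_diag)
  moreover have "r = length (cs i) \<Longrightarrow> in_diag (rho \<tau>) r i"
    using True i1 by (simp add: T_in_diag)
  ultimately show ?thesis using True rl
    by (auto simp: in_diag_def Lq_len n_def)
qed

lemma Lq_ent: "ent Lq r c = (if in_diag Lq r c then (if c = i \<and> Suc p0 \<le> r \<and> r < length (cs i) then cs i ! r else ent (rho \<tau>) r c) else 0)"
proof (cases "in_diag Lq r c")
  case False thus ?thesis by simp
next
  case True
  hence dT: "in_diag (rho \<tau>) r c" and nh: "\<not> (r = length (cs i) \<and> c = i)" using Lq_in_diag by auto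
  have b: "1 \<le> r" "r \<le> n" "1 \<le> c" using True by (auto simp: in_diag_def Lq_len)
  define row where "row = rho \<tau> ! (r - 1)"
  have cl: "c \<le> length row" using len_T_row[of r c] b dT row_def by simp
  have eT: "ent (rho \<tau>) r c = row ! (c - 1)" using dT row_def by (simp add: ent_def)
  have cL: "c \<le> length (Lq ! (r - 1))" using True by (simp add: in_diag_def)
  have eL: "ent Lq r c = Lq ! (r - 1) ! (c - 1)" using True by (simp add: ent_def)
  have nth: "Lq ! (r - 1) = (if r < Suc p0 then row
                  else if r < length (cs i) then row[i - 1 := ent (rho \<tau>) (r + 1) i]
                  else if r = length (cs i) then take (i - 1) row
                  else row)" using Lq_nth[OF b(1,2)] unfolding row_def[symmetric] by (simp add: Let_def)
  show ?thesis
  proof (cases "r < Suc p0")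
    case True thus ?thesis using nth eL eT \<open>in_diag Lq r c\<close> by simp
  next
    case F1: False
    show ?thesis
    proof (cases "r < length (cs i)")
      case True
      have e1: "ent (rho \<tau>) (r + 1) i = cs i ! r" using True i1 by (simp add: T_ent)
      show ?thesis
      proof (cases "c = i")
        case True
        thus ?thesis using nth eL F1 \<open>r < length (cs i)\<close> e1 cl \<open>in_diag Lq r c\<close> i1 by simp
      next
        case False
        hence "c - 1 \<noteq> i - 1" using b i1 by arith
        thus ?thesis using nth eL eT F1 \<open>r < length (cs i)\<close> False \<open>in_diag Lq r c\<close> by simp
      qed
    next
      case F2: False
      show ?thesis
      proof (cases "r = length (cs i)")
        case True
        hence "c \<noteq> i" using nh by simp
        moreover have "c \<le> i - 1" using cL nth F1 True by simp
        moreover have "c - 1 < i - 1" using \<open>c \<le> i - 1\<close> b by arith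
        ultimately show ?thesis using nth eL eT F1 True \<open>in_diag Lq r c\<close> by (simp add: nth_take)
      next
        case False thus ?thesis using nth eL eT F1 F2 \<open>in_diag Lq r c\<close> by simp
      qed
    qed
  qed
qed

lemma cs1_len: "length (cs 1) = n"
proof -
  have "{r. in_diag \<tau> r 1} = {1..n}" using in_diag_1 by (auto simp: in_diag_def n_def)
  thus ?thesis by (simp add: length_col_sorted)
qed

lemma Lq_in_diag_out: "i = 1 \<Longrightarrow> n \<le> r \<Longrightarrow> \<not> in_diag Lq r c"
proof
  assume i: "i = 1" and r: "n \<le> r" and d: "in_diag Lq r c"
  have rn: "r = n" using r d by (simp add: in_diag_def Lq_len)
  have h: "length (cs i) = n" using cs1_len i by simp
  have dT: "in_diag (rho \<tau>) n c" "c \<noteq> i" using d Lq_in_diag rn h by auto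
  hence c2: "Suc i \<le> c" using i by (simp add: in_diag_def)
  have "n \<le> length (cs c)" using dT by (simp add: T_in_diag)
  moreover have "length (cs c) \<le> length (cs (Suc i))" using length_col_sorted_mono[OF _ c2] by simp
  ultimately show False using add h by simp
qed

lemma tjdt_props:
  "length (tjdt (Suc i) (rho \<tau>)) = (if i = 1 then n - 1 else n) \<and>
   (\<forall>r c. in_diag (tjdt (Suc i) (rho \<tau>)) r c = in_diag Lq r c) \<and>
   (\<forall>r c. ent (tjdt (Suc i) (rho \<tau>)) r c = ent Lq r c)"
proof (cases "i = 1")
  case False
  have "filter (\<lambda>row. row \<noteq> []) Lq = Lq"
  proof (rule filter_all_ne)
    fix k assume k: "k < length Lq"
    have "in_diag Lq (Suc k) 1" using k False cs1_len Lq_in_diag[of "Suc k" 1] by (simp add: T_in_diag Lq_len)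
    thus "Lq ! k \<noteq> []" by (auto simp: in_diag_def)
  qed
  thus ?thesis using tjdt_eq False Lq_len by simp
next
  case True
  have h: "length (cs i) = n" using cs1_len True by simp
  have n1: "1 \<le> n" using r1_in by simp
  have fe: "filter (\<lambda>row. row \<noteq> []) Lq = take (n - 1) Lq @ drop n Lq"
  proof (rule filter_one_empty)
    show "1 \<le> n" "n \<le> length Lq" using n1 by (auto simp: Lq_len)
    show "Lq ! (n - 1) = []" using Lq_nth[of n] n1 h p0 True by (simp add: Let_def)
    fix k assume k: "k < length Lq" "k \<noteq> n - 1"
    have sk: "Suc k \<noteq> n" using k Lq_len by arith
    have "in_diag Lq (Suc k) 1" using k sk h cs1_len Lq_in_diag[of "Suc k" 1] by (simp add: T_in_diag Lq_len)
    thus "Lq ! k \<noteq> []" by (auto simp: in_diag_def)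
  qed
  have len: "length (tjdt (Suc i) (rho \<tau>)) = n - 1" using tjdt_eq fe n1 by (simp add: Lq_len)
  have D: "in_diag (tjdt (Suc i) (rho \<tau>)) r c = in_diag Lq r c" for r c
  proof (cases "1 \<le> r")
    case False thus ?thesis by (simp add: in_diag_def)
  next
    case True
    show ?thesis using del_row(2)[of n Lq r c] True n1 Lq_in_diag_out[OF \<open>i = 1\<close>, of r c]
        Lq_in_diag_out[OF \<open>i = 1\<close>, of "Suc r" c] tjdt_eq fe by (auto simp: Lq_len)
  qed
  have E: "ent (tjdt (Suc i) (rho \<tau>)) r c = ent Lq r c" for r c
  proof (cases "in_diag Lq r c")
    case False thus ?thesis using D[of r c] by simp
  next
    case dd: True
    have "\<not> n \<le> r" using Lq_in_diag_out[OF \<open>i = 1\<close>, of r c] dd by blast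
    hence r: "1 \<le> r" "r < n" using dd by (auto simp: in_diag_def)
    show ?thesis using del_row(3)[of n Lq r c] r n1 tjdt_eq fe by (simp add: Lq_len)
  qed
  show ?thesis using len D E True by simp
qed

lemma dist_cs: "distinct (cs c)"
  using distinct_col_entries[of c] by (simp add: col_sorted_def)

lemma main_eq: "rho (phi (Suc i) \<tau>) = tjdt (Suc i) (rho \<tau>)"
proof (rule tab_eqI)
  show "length (rho (phi (Suc i) \<tau>)) = length (tjdt (Suc i) (rho \<tau>))"
    using tjdt_props len_phi rho_len by simp
next
  have lrm: "length (remove1 x (cs i)) = length (cs i) - 1" using x_in_col by (simp add: length_remove1)
  have bnd: "r \<le> length (col_sorted (phi (Suc i) \<tau>) c) \<Longrightarrow> r \<le> length (phi (Suc i) \<tau>)" for r c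
  proof -
    assume r: "r \<le> length (col_sorted (phi (Suc i) \<tau>) c)"
    show ?thesis
    proof (cases "i = 1")
      case False thus ?thesis using r len_phi cs_phi[of c] len_cs_le_n[of c] len_cs_le_n[of i] lrm by (auto split: if_splits)
    next
      case True
      have "length (col_sorted (phi (Suc i) \<tau>) c) \<le> n - 1"
      proof (cases "c = i")
        case True thus ?thesis using cs_phi[of c] lrm len_cs_le_n[of i] by simp
      next
        case F: False
        show ?thesis
        proof (cases "c = 0")
          case True thus ?thesis using cs_phi[of c] F by (simp add: col_sorted_def col_entries_0)
        next
          case False
          hence "Suc i \<le> c" using F \<open>i = 1\<close> by simp
          hence "length (cs c) \<le> length (cs (Suc i))" using length_col_sorted_mono[of "Suc i" c] by simp
          thus ?thesis using cs_phi[of c] F add len_cs_le_n[of i] by simp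
        qed
      qed
      thus ?thesis using r len_phi True by simp
    qed
  qed
  show D: "in_diag (rho (phi (Suc i) \<tau>)) r c = in_diag (tjdt (Suc i) (rho \<tau>)) r c" for r c
  proof -
    have "in_diag (rho (phi (Suc i) \<tau>)) r c = (1 \<le> r \<and> 1 \<le> c \<and> r \<le> length (col_sorted (phi (Suc i) \<tau>) c))"
      using rho_in_diag[of "phi (Suc i) \<tau>" r c] bnd[of r c] by auto
    also have "\<dots> = in_diag Lq r c"
      using Lq_in_diag[of r c] cs_phi[of c] lrm by (auto simp: T_in_diag)
    finally show ?thesis using tjdt_props by simp
  qed
  show "ent (rho (phi (Suc i) \<tau>)) r c = ent (tjdt (Suc i) (rho \<tau>)) r c" for r c
  proof (cases "in_diag (rho (phi (Suc i) \<tau>)) r c")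
    case False thus ?thesis using D[of r c] by simp
  next
    case True
    hence dL: "in_diag Lq r c" using D tjdt_props by simp
    hence b: "1 \<le> r" "1 \<le> c" "r \<le> length (cs c)" "\<not> (r = length (cs i) \<and> c = i)"
      using Lq_in_diag[of r c] by (auto simp: T_in_diag)
    have "ent (rho (phi (Suc i) \<tau>)) r c = col_sorted (phi (Suc i) \<tau>) c ! (r - 1)"
      using True rho_ent[of "phi (Suc i) \<tau>" r c] rho_in_diag[of "phi (Suc i) \<tau>" r c] by simp
    also have "\<dots> = (if c = i \<and> Suc p0 \<le> r \<and> r < length (cs i) then cs i ! r else ent (rho \<tau>) r c)"
    proof (cases "c = i")
      case False thus ?thesis using cs_phi[of c] b by (simp add: T_ent)
    next
      case True
      have r: "r - 1 < length (cs i) - 1" using b True by auto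
      have "remove1 x (cs i) ! (r - 1) = (if r - 1 < p0 then cs i ! (r - 1) else cs i ! Suc (r - 1))"
        using nth_remove1[OF dist_cs p0[THEN conjunct1] r] p0 by simp
      thus ?thesis using True cs_phi[of c] b r by (auto simp: T_ent)
    qed
    also have "\<dots> = ent Lq r c" using Lq_ent dL by simp
    finally show ?thesis using tjdt_props by simp
  qed
qed

end
end


lemma from_addable:
  assumes i: "1 \<le> i" and ad: "has_addable_in_col (rho \<tau>) (i + 1)"
  shows "length (col_sorted \<tau> (Suc i)) < length (col_sorted \<tau> i)"
proof -
  obtain r where an: "addable_node (rho \<tau>) r (Suc i)" using ad by (auto simp: has_addable_in_col_def)
  hence r: "1 \<le> r" "\<not> in_diag (rho \<tau>) r (Suc i)" "in_diag (rho \<tau>) r i" using i by (auto simp: addable_node_def)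
  hence "r \<le> length \<tau>" "r \<le> length (col_sorted \<tau> i)" using rho_in_diag[of \<tau> r i] by auto
  moreover hence "\<not> r \<le> length (col_sorted \<tau> (Suc i))" using r rho_in_diag[of \<tau> r "Suc i"] by auto
  ultimately show ?thesis by simp
qed

lemma ex_row_of:
  assumes i: "1 \<le> i" and l: "length (col_sorted \<tau> (Suc i)) < length (col_sorted \<tau> i)"
  shows "\<exists>r. 1 \<le> r \<and> r \<le> length \<tau> \<and> length (\<tau> ! (r - 1)) = i"
proof (rule ccontr)
  assume ne: "\<not> ?thesis"
  have "{r. in_diag \<tau> r i} \<subseteq> {r. in_diag \<tau> r (Suc i)}"
  proof
    fix r assume "r \<in> {r. in_diag \<tau> r i}"
    hence d: "in_diag \<tau> r i" by simp
    hence "length (\<tau> ! (r - 1)) \<noteq> i" using ne by (auto simp: in_diag_def)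
    thus "r \<in> {r. in_diag \<tau> r (Suc i)}" using d by (auto simp: in_diag_def)
  qed
  hence "card {r. in_diag \<tau> r i} \<le> card {r. in_diag \<tau> r (Suc i)}" by (rule card_mono[OF finite_in_diag])
  thus False using l by (simp add: length_col_sorted)
qed

theorem theorem6p20:
  fixes T \<tau> :: tableau and i :: nat
  assumes "1 \<le> i"
    and "is_SSRT T"
    and "has_addable_in_col T (i + 1)"
    and "is_SSRCT \<tau>"
    and "rho \<tau> = T"
  shows "is_SSRCT (phi (i + 1) \<tau>) \<and> rho (phi (i + 1) \<tau>) = tjdt (i + 1) T"
proof -
  have add: "length (col_sorted \<tau> (Suc i)) < length (col_sorted \<tau> i)"
    using from_addable[of i \<tau>] assms by simp
  have ex: "\<exists>r. 1 \<le> r \<and> r \<le> length \<tau> \<and> length (\<tau> ! (r - 1)) = i"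
    by (rule ex_row_of[OF assms(1) add])
  interpret stp \<tau> i using assms(4,1) ex by unfold_locales
  have "is_SSRCT (phi (Suc i) \<tau>)" by (rule ssrct_phi)
  moreover have "rho (phi (Suc i) \<tau>) = tjdt (Suc i) (rho \<tau>)" by (rule main_eq[OF add])
  ultimately show ?thesis using assms(5) by simp
qed


end
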